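(* Every non-interleaved single-ancilla CNOT-based SEC for the gross code has circuit distance $d_{\mathrm{circ}}\le 11$.
   Context: The gross code is the $[[144,12,12]]$ bivariate bicycle CSS code: with $S_k$ the $k\times k$ cyclic shift matrix, $x=S_{12}\otimes I_6$, $y=I_{12}\otimes S_6$, $A=x^3+y+y^2$, $B=y^3+x+x^2$ (over $\mathbb{F}_2$), $H_X=[A\mid B]$ and $H_Z=[B^{T}\mid A^{T}]$; there are 72 $X$ checks and 72 $Z$ checks, each of weight six. Single-ancilla CNOT-based SEC: each check has its own dedicated ancilla. For an $X$ check the ancilla is prepared in $|+\rangle$, CNOTs go from ancilla to each of the data qubits in its support, and it is measured in $X$; for a $Z$ check the ancilla is prepared in $|0\rangle$, CNOTs go from each data qubit in its support to the ancilla, and it is measured in $Z$. Operations take one time step, each qubit in at most one operation per step; repeated for several rounds. It is non-interleaved if either all $X$-type-check CNOTs precede all overlapping $Z$-type-check CNOTs (acting on common data qubits), or all $Z$-type-check CNOTs precede all overlapping $X$-type-check CNOTs. Noise and circuit distance: each operation fails independently; failed idles are followed by a Pauli $X$, $Y$ or $Z$; failed CNOTs by a non-identity two-qubit Pauli; failed preparations prepare the orthogonal state; failed measurements flip their outcome; each such event is an error mechanism. In an $X$-basis (resp. $Z$-basis) memory experiment (data prepared in the $|+\rangle$ (resp. $|0\rangle$) product state, several noisy rounds, then all data measured in that basis, giving a perfect final round), detectors are parities of outcomes deterministic without noise. $d^X_{\mathrm{circ}}$ (resp. $d^Z_{\mathrm{circ}}$) is the minimum number of error mechanisms flipping no detector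 but flipping a logical observable, and $d_{\mathrm{circ}}=\min(d^X_{\mathrm{circ}},d^Z_{\mathrm{circ}})$. *)

theory Defs
  imports Main "HOL-Library.Extended_Nat"
begin

text \<open>Matrices over F2 are boolean-valued functions on indices; entries
  outside the intended range are irrelevant.  All matrices below are 72 x 72.\<close>

type_synonym f2mat = "nat \<Rightarrow> nat \<Rightarrow> bool"

definition madd :: "f2mat \<Rightarrow> f2mat \<Rightarrow> f2mat" where
  "madd M N = (\<lambda>i j. M i j \<noteq> N i j)"

definition mmul :: "nat \<Rightarrow> f2mat \<Rightarrow> f2mat \<Rightarrow> f2mat" where
  "mmul n M N = (\<lambda>i j. odd (card {k. k < n \<and> M i k \<and> N k j}))"

definition mid :: "nat \<Rightarrow> f2mat" where
  "mid n = (\<lambda>i j. i < n \<and> i = j)"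

fun mpow :: "nat \<Rightarrow> f2mat \<Rightarrow> nat \<Rightarrow> f2mat" where
  "mpow n M 0 = mid n"
| "mpow n M (Suc k) = mmul n M (mpow n M k)"

definition cshift :: "nat \<Rightarrow> f2mat" where
  "cshift k = (\<lambda>i j. i < k \<and> j = (i + 1) mod k)"

definition kron :: "nat \<Rightarrow> nat \<Rightarrow> f2mat \<Rightarrow> f2mat \<Rightarrow> f2mat" where
  "kron m n P Q = (\<lambda>i j. i < m*n \<and> j < m*n \<and>
                        P (i div n) (j div n) \<and> Q (i mod n) (j mod n))"

definition gx :: f2mat where "gx = kron 12 6 (cshift 12) (mid 6)"
definition gy :: f2mat where "gy = kron 12 6 (mid 12) (cshift 6)"

definition gA :: f2mat where "gA = madd (mpow 72 gx 3) (madd gy (mpow 72 gy 2))"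
definition gB :: f2mat where "gB = madd (mpow 72 gy 3) (madd gx (mpow 72 gx 2))"

text \<open>H_X = [A | B], H_Z = [B^T | A^T]; rows i < 72, data columns q < 144.\<close>
definition HX :: f2mat where
  "HX i q = (i < 72 \<and> ((q < 72 \<and> gA i q) \<or> (72 \<le> q \<and> q < 144 \<and> gB i (q - 72))))"

definition HZ :: f2mat where
  "HZ j q = (j < 72 \<and> ((q < 72 \<and> gB q j) \<or> (72 \<le> q \<and> q < 144 \<and> gA (q - 72) j)))"

definition in_kernel :: "f2mat \<Rightarrow> (nat \<Rightarrow> bool) \<Rightarrow> bool" where
  "in_kernel H u \<longleftrightarrow> (\<forall>q. u q \<longrightarrow> q < 144) \<and>
     (\<forall>i < 72. even (card {q. q < 144 \<and> H i q \<and> u q}))"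

definition in_rowspace :: "f2mat \<Rightarrow> (nat \<Rightarrow> bool) \<Rightarrow> bool" where
  "in_rowspace H v \<longleftrightarrow> (\<exists>w. \<forall>q. v q = (q < 144 \<and> odd (card {i. i < 72 \<and> w i \<and> H i q})))"

definition x_logical :: "(nat \<Rightarrow> bool) \<Rightarrow> bool" where
  "x_logical v \<longleftrightarrow> in_kernel HZ v \<and> \<not> in_rowspace HX v"

definition z_logical :: "(nat \<Rightarrow> bool) \<Rightarrow> bool" where
  "z_logical v \<longleftrightarrow> in_kernel HX v \<and> \<not> in_rowspace HZ v"

text \<open>Qubits: data 0..143, ancilla of X check i is 144+i, of Z check j is 216+j.\<close>
definition nqubits :: nat where "nqubits = 288"
definition xanc :: "nat \<Rightarrow> nat" where "xanc i = 144 + i"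
definition zanc :: "nat \<Rightarrow> nat" where "zanc j = 216 + j"

datatype op = PrepX nat | PrepZ nat | MeasX nat | MeasZ nat
  | CNOT nat nat  \<comment> \<open>control, target\<close>

fun op_qubits :: "op \<Rightarrow> nat list" where
  "op_qubits (PrepX q) = [q]"
| "op_qubits (PrepZ q) = [q]"
| "op_qubits (MeasX q) = [q]"
| "op_qubits (MeasZ q) = [q]"
| "op_qubits (CNOT c t) = [c, t]"

text \<open>A circuit is a list of time steps, each a list of operations.\<close>
type_synonym circuit = "op list list"

text \<open>A Pauli frame: X part and Z part (Y = both).\<close>
type_synonym frame = "(nat \<Rightarrow> bool) \<times> (nat \<Rightarrow> bool)"

fun apply_op :: "op \<Rightarrow> frame \<Rightarrow> frame" where
  "apply_op (CNOT c t) (fx, fz) = (fx(t := (fx t \<noteq> fx c)), fz(c := (fz c \<noteq> fz t)))"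
| "apply_op (PrepX q) (fx, fz) = (fx(q := False), fz(q := False))"
| "apply_op (PrepZ q) (fx, fz) = (fx(q := False), fz(q := False))"
| "apply_op (MeasX q) f = f"
| "apply_op (MeasZ q) f = f"

definition apply_step :: "op list \<Rightarrow> frame \<Rightarrow> frame" where
  "apply_step ops f = fold apply_op ops f"

text \<open>Error mechanisms / Pauli insertions: Ins k px pz inserts the Pauli (px,pz)
  right after time step k; Flip k q flips the outcome of the measurement of
  qubit q at step k.\<close>
datatype mech = Ins nat "nat \<Rightarrow> bool" "nat \<Rightarrow> bool" | Flip nat nat

definition add_ins :: "mech set \<Rightarrow> nat \<Rightarrow> frame \<Rightarrow> frame" where
  "add_ins F k f =
     ((\<lambda>q. fst f q \<noteq> odd (card {m \<in> F. \<exists>px pz. m = Ins k px pz \<and> px q})),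
      (\<lambda>q. snd f q \<noteq> odd (card {m \<in> F. \<exists>px pz. m = Ins k px pz \<and> pz q})))"

text \<open>Frame just before step k.\<close>
fun frame_at :: "circuit \<Rightarrow> mech set \<Rightarrow> nat \<Rightarrow> frame" where
  "frame_at C F 0 = (\<lambda>_. False, \<lambda>_. False)"
| "frame_at C F (Suc k) = add_ins F k (apply_step (C ! k) (frame_at C F k))"

definition outcomes :: "circuit \<Rightarrow> (nat \<times> nat) set" where
  "outcomes C = {(k, q). k < length C \<and> (MeasX q \<in> set (C ! k) \<or> MeasZ q \<in> set (C ! k))}"

definition flipped :: "circuit \<Rightarrow> mech set \<Rightarrow> (nat \<times> nat) set" where
  "flipped C F = {(k, q). (k, q) \<in> outcomes C \<and>
      (((MeasX q \<in> set (C ! k) \<and> snd (frame_at C F k) q) \<or>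
        (MeasZ q \<in> set (C ! k) \<and> fst (frame_at C F k) q))
       \<noteq> odd (card {m \<in> F. m = Flip k q}))}"

definition flips :: "circuit \<Rightarrow> mech set \<Rightarrow> (nat \<times> nat) set \<Rightarrow> bool" where
  "flips C F S \<longleftrightarrow> odd (card (flipped C F \<inter> S))"

definition single :: "nat \<Rightarrow> nat \<Rightarrow> bool" where
  "single q = (\<lambda>q'. q' = q)"

definition nopauli :: "nat \<Rightarrow> bool" where
  "nopauli = (\<lambda>_. False)"

text \<open>Gauge insertions: a stabilizer of the freshly prepared / freshly
  measured single-qubit state, inserted right after the operation.  The
  outcome distribution of the noiseless stabilizer circuit is a reference
  outcome XOR a uniformly random element of the span of the flip patterns of
  these insertions, so a parity is deterministic iff no gauge flips it.\<close>
definition gauges :: "circuit \<Rightarrow> mech set" where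
  "gauges C = {g. \<exists>k q. k < length C \<and>
      ((PrepX q \<in> set (C ! k) \<and> g = Ins k (single q) nopauli) \<or>
       (MeasX q \<in> set (C ! k) \<and> g = Ins k (single q) nopauli) \<or>
       (PrepZ q \<in> set (C ! k) \<and> g = Ins k nopauli (single q)) \<or>
       (MeasZ q \<in> set (C ! k) \<and> g = Ins k nopauli (single q)))}"

definition deterministic :: "circuit \<Rightarrow> (nat \<times> nat) set \<Rightarrow> bool" where
  "deterministic C S \<longleftrightarrow> S \<subseteq> outcomes C \<and> (\<forall>g \<in> gauges C. \<not> flips C {g} S)"

definition mechs :: "circuit \<Rightarrow> nat set \<Rightarrow> mech set" where
  "mechs C N = {m. \<exists>k \<in> N. k < length C \<and>
     ((\<exists>q px pz. q < nqubits \<and> q \<notin> set (concat (map op_qubits (C ! k))) \<and> (px \<or> pz) \<and>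
          m = Ins k (\<lambda>q'. q' = q \<and> px) (\<lambda>q'. q' = q \<and> pz))
    \<or> (\<exists>c t px pz. CNOT c t \<in> set (C ! k) \<and>
          (\<forall>q. q \<noteq> c \<and> q \<noteq> t \<longrightarrow> \<not> px q \<and> \<not> pz q) \<and> (\<exists>q. px q \<or> pz q) \<and>
          m = Ins k px pz)
    \<or> (\<exists>q. PrepX q \<in> set (C ! k) \<and> m = Ins k nopauli (single q))
    \<or> (\<exists>q. PrepZ q \<in> set (C ! k) \<and> m = Ins k (single q) nopauli)
    \<or> (\<exists>q. (MeasX q \<in> set (C ! k) \<or> MeasZ q \<in> set (C ! k)) \<and> m = Flip k q))}"

record sched =
  T  :: nat                       \<comment> \<open>number of time steps of one round\<close>
  pX :: "nat \<Rightarrow> nat"               \<comment> \<open>preparation time of X-check ancilla i\<close>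
  cX :: "nat \<Rightarrow> nat \<Rightarrow> nat"        \<comment> \<open>time of CNOT of X check i on data qubit q\<close>
  mX :: "nat \<Rightarrow> nat"
  pZ :: "nat \<Rightarrow> nat"
  cZ :: "nat \<Rightarrow> nat \<Rightarrow> nat"
  mZ :: "nat \<Rightarrow> nat"

definition round_step :: "sched \<Rightarrow> nat \<Rightarrow> op list" where
  "round_step s \<tau> =
     [PrepX (xanc i). i \<leftarrow> [0..<72], pX s i = \<tau>] @
     [CNOT (xanc i) q. i \<leftarrow> [0..<72], q \<leftarrow> [0..<144], HX i q \<and> cX s i q = \<tau>] @
     [MeasX (xanc i). i \<leftarrow> [0..<72], mX s i = \<tau>] @
     [PrepZ (zanc j). j \<leftarrow> [0..<72], pZ s j = \<tau>] @
     [CNOT q (zanc j). j \<leftarrow> [0..<72], q \<leftarrow> [0..<144], HZ j q \<and> cZ s j q = \<tau>] @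
     [MeasZ (zanc j). j \<leftarrow> [0..<72], mZ s j = \<tau>]"

definition sec_valid :: "sched \<Rightarrow> bool" where
  "sec_valid s \<longleftrightarrow>
     (\<forall>i < 72. pX s i < mX s i \<and> mX s i < T s \<and>
        (\<forall>q. HX i q \<longrightarrow> pX s i < cX s i q \<and> cX s i q < mX s i)) \<and>
     (\<forall>j < 72. pZ s j < mZ s j \<and> mZ s j < T s \<and>
        (\<forall>q. HZ j q \<longrightarrow> pZ s j < cZ s j q \<and> cZ s j q < mZ s j)) \<and>
     (\<forall>\<tau> < T s. distinct (concat (map op_qubits (round_step s \<tau>))))"

definition non_interleaved :: "sched \<Rightarrow> bool" where
  "non_interleaved s \<longleftrightarrow>
     (\<forall>i j q. HX i q \<longrightarrow> HZ j q \<longrightarrow> cX s i q < cZ s j q) \<or>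
     (\<forall>i j q. HX i q \<longrightarrow> HZ j q \<longrightarrow> cZ s j q < cX s i q)"

definition round_steps :: "sched \<Rightarrow> op list list" where
  "round_steps s = map (round_step s) [0..<T s]"

text \<open>X-basis (xb = True) or Z-basis memory experiment with r noisy rounds:
  noiseless data preparation (step 0), r rounds, noiseless final data
  measurement (last step).\<close>
definition memory :: "bool \<Rightarrow> sched \<Rightarrow> nat \<Rightarrow> circuit" where
  "memory xb s r =
     [map (\<lambda>q. if xb then PrepX q else PrepZ q) [0..<144]] @
     concat (replicate r (round_steps s)) @
     [map (\<lambda>q. if xb then MeasX q else MeasZ q) [0..<144]]"

definition noisy_steps :: "sched \<Rightarrow> nat \<Rightarrow> nat set" where
  "noisy_steps s r = {1..r * T s}"

text \<open>Detectors: parities of outcomes that are deterministic in the noiseless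
  experiment for every initial data product state of the memory basis that is
  a +1 eigenstate of all checks of that basis (i.e. irrespective of the
  encoded logical information).  For the X-basis experiment these initial
  states are Z^u |+>^n with u in ker H_X.\<close>
definition detector :: "bool \<Rightarrow> sched \<Rightarrow> nat \<Rightarrow> (nat \<times> nat) set \<Rightarrow> bool" where
  "detector xb s r S \<longleftrightarrow> deterministic (memory xb s r) S \<and>
     (\<forall>u. in_kernel (if xb then HX else HZ) u \<longrightarrow>
        \<not> flips (memory xb s r) {if xb then Ins 0 nopauli u else Ins 0 u nopauli} S)"

definition logical_obs :: "bool \<Rightarrow> sched \<Rightarrow> nat \<Rightarrow> (nat \<times> nat) set \<Rightarrow> bool" where
  "logical_obs xb s r S \<longleftrightarrow> (\<exists>v. (if xb then x_logical v else z_logical v) \<and>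
     S = {(length (memory xb s r) - 1, q) | q. q < 144 \<and> v q})"

definition d_circ_basis :: "bool \<Rightarrow> sched \<Rightarrow> nat \<Rightarrow> enat" where
  "d_circ_basis xb s r = Inf {enat (card F) | F.
      finite F \<and> F \<subseteq> mechs (memory xb s r) (noisy_steps s r) \<and>
      (\<forall>S. detector xb s r S \<longrightarrow> \<not> flips (memory xb s r) F S) \<and>
      (\<exists>S. logical_obs xb s r S \<and> flips (memory xb s r) F S)}"

definition d_circ :: "sched \<Rightarrow> nat \<Rightarrow> enat" where
  "d_circ s r = min (d_circ_basis True s r) (d_circ_basis False s r)"

end

theory Submission
  imports Defs "HOL-Library.Multiset"
begin


lemma perm_mmul:
  assumes "\<And>i k. M i k \<longleftrightarrow> i < n \<and> k = f i"
  shows "mmul n M N = (\<lambda>i j. i < n \<and> f i < n \<and> N (f i) j)"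
proof (intro ext)
  fix i j
  have "{k. k < n \<and> M i k \<and> N k j} = (if i < n \<and> f i < n \<and> N (f i) j then {f i} else {})"
    using assms by auto
  then show "mmul n M N i j = (i < n \<and> f i < n \<and> N (f i) j)"
    unfolding mmul_def by simp
qed

definition xsf :: "nat \<Rightarrow> nat" where "xsf i = 6 * ((i div 6 + 1) mod 12) + i mod 6"
definition ysf :: "nat \<Rightarrow> nat" where "ysf i = 6 * (i div 6) + (i mod 6 + 1) mod 6"

lemma divmod6: "(d::nat) < 6 \<Longrightarrow> j = 6 * c + d \<longleftrightarrow> j div 6 = c \<and> j mod 6 = d"
  by auto

lemma gx_cf: "gx i j \<longleftrightarrow> i < 72 \<and> j = xsf i"
proof -
  have "(j = xsf i) = (j div 6 = (i div 6 + 1) mod 12 \<and> j mod 6 = i mod 6)"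
    unfolding xsf_def by (rule divmod6) simp
  moreover have "i < 72 \<Longrightarrow> xsf i < 72" unfolding xsf_def by linarith
  moreover have "i < 72 \<Longrightarrow> i div 6 < 12" by linarith
  ultimately show ?thesis
    unfolding gx_def kron_def cshift_def mid_def by auto
qed

lemma gy_cf: "gy i j \<longleftrightarrow> i < 72 \<and> j = ysf i"
proof -
  have "(j = ysf i) = (j div 6 = i div 6 \<and> j mod 6 = (i mod 6 + 1) mod 6)"
    unfolding ysf_def by (rule divmod6) simp
  moreover have "i < 72 \<Longrightarrow> ysf i < 72"
  proof -
    assume "i < 72"
    then have "i div 6 \<le> 11" by linarith
    moreover have "(i mod 6 + 1) mod 6 < 6" by simp
    ultimately show ?thesis unfolding ysf_def by linarith
  qed
  ultimately show ?thesis
    unfolding gy_def kron_def cshift_def mid_def by auto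
qed

lemma mpow_perm:
  assumes "\<And>i k. M i k \<longleftrightarrow> i < 72 \<and> k = f i" and "\<And>i. i < 72 \<Longrightarrow> f i < 72"
  shows "mpow 72 M n = (\<lambda>i j. i < 72 \<and> j = (f ^^ n) i)"
proof (induction n)
  case 0
  then show ?case by (auto simp: mid_def)
next
  case (Suc n)
  have "mpow 72 M (Suc n) = mmul 72 M (mpow 72 M n)" by simp
  also have "\<dots> = (\<lambda>i j. i < 72 \<and> f i < 72 \<and> mpow 72 M n (f i) j)" by (rule perm_mmul[OF assms(1)])
  also have "\<dots> = (\<lambda>i j. i < 72 \<and> j = (f ^^ Suc n) i)"
    using Suc.IH assms(2) by (auto simp: funpow_swap1)
  finally show ?case .
qed

lemma xs_lt: "xsf i < 72"
proof -
  have "(i div 6 + 1) mod 12 \<le> 11" by simp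
  moreover have "i mod 6 < 6" by simp
  ultimately show ?thesis unfolding xsf_def by linarith
qed
lemma ys_lt: "i < 72 \<Longrightarrow> ysf i < 72"
proof -
  assume "i < 72"
  then have "i div 6 \<le> 11" by linarith
  moreover have "(i mod 6 + 1) mod 6 < 6" by simp
  ultimately show ?thesis unfolding ysf_def by linarith
qed

lemma gx_perm: "gx i k \<longleftrightarrow> i < 72 \<and> k = xsf i" by (rule gx_cf)
lemma gy_perm: "gy i k \<longleftrightarrow> i < 72 \<and> k = ysf i" by (rule gy_cf)

lemma mpx3: "mpow 72 gx 3 i j \<longleftrightarrow> i < 72 \<and> j = xsf (xsf (xsf i))"
proof -
  have "mpow 72 gx 3 = (\<lambda>i j. i < 72 \<and> j = (xsf ^^ 3) i)"
    by (rule mpow_perm) (rule gx_perm, rule xs_lt)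
  moreover have "(xsf ^^ 3) i = xsf (xsf (xsf i))" by (simp add: numeral_3_eq_3)
  ultimately show ?thesis by simp
qed
lemma mpx2: "mpow 72 gx 2 i j \<longleftrightarrow> i < 72 \<and> j = xsf (xsf i)"
proof -
  have "mpow 72 gx 2 = (\<lambda>i j. i < 72 \<and> j = (xsf ^^ 2) i)"
    by (rule mpow_perm) (rule gx_perm, rule xs_lt)
  moreover have "(xsf ^^ 2) i = xsf (xsf i)" by (simp add: numeral_2_eq_2)
  ultimately show ?thesis by simp
qed
lemma mpy3: "mpow 72 gy 3 i j \<longleftrightarrow> i < 72 \<and> j = ysf (ysf (ysf i))"
proof -
  have "mpow 72 gy 3 = (\<lambda>i j. i < 72 \<and> j = (ysf ^^ 3) i)"
    by (rule mpow_perm) (rule gy_perm, rule ys_lt)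
  moreover have "(ysf ^^ 3) i = ysf (ysf (ysf i))" by (simp add: numeral_3_eq_3)
  ultimately show ?thesis by simp
qed
lemma mpy2: "mpow 72 gy 2 i j \<longleftrightarrow> i < 72 \<and> j = ysf (ysf i)"
proof -
  have "mpow 72 gy 2 = (\<lambda>i j. i < 72 \<and> j = (ysf ^^ 2) i)"
    by (rule mpow_perm) (rule gy_perm, rule ys_lt)
  moreover have "(ysf ^^ 2) i = ysf (ysf i)" by (simp add: numeral_2_eq_2)
  ultimately show ?thesis by simp
qed

lemma gA_cf: "gA i j \<longleftrightarrow> i < 72 \<and> ((j = xsf (xsf (xsf i))) \<noteq> ((j = ysf i) \<noteq> (j = ysf (ysf i))))"
  unfolding gA_def madd_def mpx3 mpy2 gy_cf by auto

lemma gB_cf: "gB i j \<longleftrightarrow> i < 72 \<and> ((j = ysf (ysf (ysf i))) \<noteq> ((j = xsf i) \<noteq> (j = xsf (xsf i))))"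
  unfolding gB_def madd_def mpy3 mpx2 gx_cf by auto




definition sh :: "nat \<Rightarrow> nat \<Rightarrow> nat \<Rightarrow> nat" where
  "sh a b i = 6 * ((i div 6 + a) mod 12) + (i mod 6 + b) mod 6"

lemma sh_div: "sh a b i div 6 = (i div 6 + a) mod 12" and sh_mod: "sh a b i mod 6 = (i mod 6 + b) mod 6"
  unfolding sh_def by auto

lemma sh_lt: "sh a b i < 72"
proof -
  have "(i div 6 + a) mod 12 \<le> 11" by simp
  moreover have "(i mod 6 + b) mod 6 < 6" by simp
  ultimately show ?thesis unfolding sh_def by linarith
qed

lemma sh_sh: "sh a b (sh c d i) = sh (a + c) (b + d) i"
proof -
  have 1: "(b + (d + i mod 6) mod 6) mod 6 = (b + d + i mod 6) mod 6"
    by (metis mod_add_right_eq add.assoc)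
  have 2: "(a + (c + i div 6) mod 12) mod 12 = (a + c + i div 6) mod 12"
    by (metis mod_add_right_eq add.assoc)
  show ?thesis
    unfolding sh_def[of a b] sh_div sh_mod using 1 2
    by (simp add: sh_def add.commute add.left_commute)
qed

lemma sh_id: "i < 72 \<Longrightarrow> sh 12 6 i = i"
proof -
  assume "i < 72"
  then have "i div 6 < 12" by linarith
  then show ?thesis unfolding sh_def by simp
qed

lemma sh_inv:
  assumes "i < 72" "q < 72" "a \<le> 12" "b \<le> 6"
  shows "(q = sh a b i) \<longleftrightarrow> (i = sh (12 - a) (6 - b) q)"
proof
  assume "q = sh a b i"
  then have "sh (12 - a) (6 - b) q = sh 12 6 i" using assms by (simp add: sh_sh)
  then show "i = sh (12 - a) (6 - b) q" using sh_id assms by simp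
next
  assume "i = sh (12 - a) (6 - b) q"
  then have "sh a b i = sh 12 6 q" using assms by (simp add: sh_sh)
  then show "q = sh a b i" using sh_id assms by simp
qed

lemma xs_sh: "i < 72 \<Longrightarrow> xsf i = sh 1 0 i"
proof -
  assume "i < 72"
  then have "i div 6 < 12" by linarith
  then show ?thesis by (simp add: xsf_def sh_def)
qed
lemma ys_sh: "i < 72 \<Longrightarrow> ysf i = sh 0 1 i"
proof -
  assume "i < 72"
  then have "i div 6 < 12" by linarith
  then show ?thesis by (simp add: ysf_def sh_def)
qed

lemma x3: "i < 72 \<Longrightarrow> xsf (xsf (xsf i)) = sh 3 0 i"
  using xs_sh sh_lt sh_sh[of 1 0 1 0] sh_sh[of 1 0 2 0] by (simp add: numeral_3_eq_3 numeral_2_eq_2)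
lemma x2: "i < 72 \<Longrightarrow> xsf (xsf i) = sh 2 0 i"
  using xs_sh sh_lt sh_sh[of 1 0 1 0] by (simp add: numeral_2_eq_2)
lemma y3: "i < 72 \<Longrightarrow> ysf (ysf (ysf i)) = sh 0 3 i"
  using ys_sh sh_lt sh_sh[of 0 1 0 1] sh_sh[of 0 1 0 2] by (simp add: numeral_3_eq_3 numeral_2_eq_2)
lemma y2: "i < 72 \<Longrightarrow> ysf (ysf i) = sh 0 2 i"
  using ys_sh sh_lt sh_sh[of 0 1 0 1] by (simp add: numeral_2_eq_2)

lemma xor3: "distinct [a, b, c] \<Longrightarrow> ((j = a) \<noteq> ((j = b) \<noteq> (j = c))) \<longleftrightarrow> j \<in> set [a, b, c]"
  by auto

definition nbZ :: "nat \<Rightarrow> nat list" where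
  "nbZ q = (if q < 72 then [sh 0 3 q, sh 1 0 q, sh 2 0 q] else [sh 3 0 (q - 72), sh 0 1 (q - 72), sh 0 2 (q - 72)])"
definition nbX :: "nat \<Rightarrow> nat list" where
  "nbX q = (if q < 72 then [sh 9 6 q, sh 12 5 q, sh 12 4 q] else [sh 12 3 (q - 72), sh 11 6 (q - 72), sh 10 6 (q - 72)])"

lemma mod_ne: "k1 < k2 \<Longrightarrow> k2 < n \<Longrightarrow> ((x::nat) + k1) mod n \<noteq> (x + k2) mod n"
proof
  assume a: "k1 < k2" "k2 < n" "(x + k1) mod n = (x + k2) mod n"
  then have "n dvd (x + k2 - (x + k1))" using mod_eq_dvd_iff_nat[of "x + k1" "x + k2" n] by simp
  then have "n dvd (k2 - k1)" by simp
  then show False using a(1,2) by (simp add: nat_dvd_not_less)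
qed

lemma sh_ne_mod: "(i mod 6 + b) mod 6 \<noteq> (i mod 6 + d) mod 6 \<Longrightarrow> sh a b i \<noteq> sh c d i"
  using sh_mod by metis
lemma sh_ne_div: "(i div 6 + a) mod 12 \<noteq> (i div 6 + c) mod 12 \<Longrightarrow> sh a b i \<noteq> sh c d i"
  using sh_div by metis

lemma dist_A: "distinct [sh 3 0 i, sh 0 1 i, sh 0 2 i]"
  using sh_ne_mod[of i 0 1 3 0] sh_ne_mod[of i 0 2 3 0] sh_ne_mod[of i 1 2 0 0]
    mod_ne[of 0 1 6 "i mod 6"] mod_ne[of 0 2 6 "i mod 6"] mod_ne[of 1 2 6 "i mod 6"]
  by auto
lemma dist_B: "distinct [sh 0 3 i, sh 1 0 i, sh 2 0 i]"
  using sh_ne_mod[of i 3 0 0 1] sh_ne_mod[of i 3 0 0 2] sh_ne_div[of i 1 2 0 0]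
    mod_ne[of 0 3 6 "i mod 6"] mod_ne[of 1 2 12 "i div 6"]
  by auto

lemma gA_sh: "gA i j \<longleftrightarrow> i < 72 \<and> j \<in> set [sh 3 0 i, sh 0 1 i, sh 0 2 i]"
proof (cases "i < 72")
  case True
  have e: "xsf (xsf (xsf i)) = sh 3 0 i" "ysf i = sh 0 1 i" "ysf (ysf i) = sh 0 2 i"
    using x3 ys_sh y2 True by blast+
  show ?thesis unfolding gA_cf e(1) e(3) unfolding e(2) using xor3[OF dist_A, of j] True by simp
next
  case False
  then show ?thesis by (simp add: gA_cf)
qed
lemma gB_sh: "gB i j \<longleftrightarrow> i < 72 \<and> j \<in> set [sh 0 3 i, sh 1 0 i, sh 2 0 i]"
proof (cases "i < 72")
  case True
  have e: "ysf (ysf (ysf i)) = sh 0 3 i" "xsf i = sh 1 0 i" "xsf (xsf i) = sh 2 0 i"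
    using y3 xs_sh x2 True by blast+
  show ?thesis unfolding gB_cf e(1) e(3) unfolding e(2) using xor3[OF dist_B, of j] True by simp
next
  case False
  then show ?thesis by (simp add: gB_cf)
qed

lemma HZ_nb: "HZ j q \<longleftrightarrow> q < 144 \<and> j \<in> set (nbZ q)"
  unfolding HZ_def gA_sh gB_sh nbZ_def using sh_lt by auto

lemma HX_nb: "HX i q \<longleftrightarrow> q < 144 \<and> i < 72 \<and> i \<in> set (nbX q)"
proof (cases "q < 72")
  case True
  have "i < 72 \<Longrightarrow> (q = sh 3 0 i \<longleftrightarrow> i = sh 9 6 q) \<and> (q = sh 0 1 i \<longleftrightarrow> i = sh 12 5 q) \<and> (q = sh 0 2 i \<longleftrightarrow> i = sh 12 4 q)"
    using sh_inv[of i q 3 0] sh_inv[of i q 0 1] sh_inv[of i q 0 2] True by simp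
  then show ?thesis unfolding HX_def gA_sh nbX_def using True by auto
next
  case False
  have "i < 72 \<Longrightarrow> q - 72 < 72 \<Longrightarrow> (q - 72 = sh 0 3 i \<longleftrightarrow> i = sh 12 3 (q - 72)) \<and> (q - 72 = sh 1 0 i \<longleftrightarrow> i = sh 11 6 (q - 72)) \<and> (q - 72 = sh 2 0 i \<longleftrightarrow> i = sh 10 6 (q - 72))"
    using sh_inv[of i "q - 72" 0 3] sh_inv[of i "q - 72" 1 0] sh_inv[of i "q - 72" 2 0] by simp
  moreover have "q < 144 \<Longrightarrow> q - 72 < 72" by simp
  ultimately show ?thesis unfolding HX_def gB_sh nbX_def using False sh_lt by auto
qed

fun paired :: "nat list \<Rightarrow> bool" where
  "paired [] = True"
| "paired [x] = False"
| "paired (x # y # zs) = (x = y \<and> paired zs)"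

lemma paired_even: "paired l \<Longrightarrow> even (count_list l j)"
  by (induction l rule: paired.induct) auto

lemma count_distinct: "distinct l \<Longrightarrow> count_list l x = (if x \<in> set l then 1 else 0)"
  by (induction l) auto

lemma card_count:
  assumes "distinct E" "\<forall>q\<in>set E. distinct (nb q)"
  shows "card {q \<in> set E. i \<in> set (nb q)} = count_list (concat (map nb E)) i"
  using assms
proof (induction E)
  case Nil
  then show ?case by simp
next
  case (Cons a E)
  have "{q \<in> set (a # E). i \<in> set (nb q)} = (if i \<in> set (nb a) then insert a {q \<in> set E. i \<in> set (nb q)} else {q \<in> set E. i \<in> set (nb q)})"
    by auto
  moreover have "count_list (nb a) i = (if i \<in> set (nb a) then 1 else 0)"
    using Cons.prems(2) by (simp add: count_distinct)
  ultimately show ?case using Cons by (auto simp: count_list_append)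
qed

lemma kernel_nb:
  assumes H: "\<And>i q. H i q \<longleftrightarrow> q < 144 \<and> P i \<and> i \<in> set (nb q)"
    and dnb: "\<forall>q\<in>set E. distinct (nb q)"
    and "distinct E" "\<forall>q\<in>set E. q < 144" "paired (sort (concat (map nb E)))"
  shows "in_kernel H (\<lambda>q. q \<in> set E)"
proof -
  have "{q. q < 144 \<and> H i q \<and> q \<in> set E} = (if P i then {q \<in> set E. i \<in> set (nb q)} else {})" for i
    using assms(4) H by auto
  moreover have "even (count_list (concat (map nb E)) i)" for i
    using paired_even[OF assms(5)] by (metis count_mset mset_sort)
  ultimately show ?thesis
    using assms(4) card_count[OF assms(3) dnb] unfolding in_kernel_def by auto
qed



abbreviation nz :: "nat \<Rightarrow> bool" where "nz \<equiv> (\<lambda>_. False)"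

lemma fold_prep:
  "(\<forall>p\<in>set ops. \<exists>q. p = PrepX q \<or> p = PrepZ q) \<Longrightarrow>
   fold apply_op ops (fx, fz) =
     (\<lambda>x. fx x \<and> x \<notin> (\<Union>p\<in>set ops. set (op_qubits p)), \<lambda>x. fz x \<and> x \<notin> (\<Union>p\<in>set ops. set (op_qubits p)))"
proof (induction ops arbitrary: fx fz)
  case Nil
  then show ?case by simp
next
  case (Cons a ops)
  then obtain q where "a = PrepX q \<or> a = PrepZ q" by auto
  then show ?case using Cons by (auto intro!: ext)
qed

lemma fold_meas:
  "(\<forall>p\<in>set ops. \<exists>q. p = MeasX q \<or> p = MeasZ q) \<Longrightarrow> fold apply_op ops f = f"
proof (induction ops arbitrary: f)
  case Nil
  then show ?case by simp
next
  case (Cons a ops)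
  then obtain q where "a = MeasX q \<or> a = MeasZ q" by auto
  then show ?case using Cons by auto
qed

lemma fin_ctrl: "finite {c. CNOT c x \<in> set ops \<and> P c}"
proof -
  have "{c. CNOT c x \<in> set ops \<and> P c} \<subseteq> (\<lambda>c. CNOT c x) -` set ops" by auto
  moreover have "finite ((\<lambda>c. CNOT c x) -` set ops)"
    by (rule finite_vimageI) (auto simp: inj_def)
  ultimately show ?thesis by (rule finite_subset)
qed

lemma fin_targ: "finite {t. CNOT x t \<in> set ops \<and> P t}"
proof -
  have "{t. CNOT x t \<in> set ops \<and> P t} \<subseteq> (\<lambda>t. CNOT x t) -` set ops" by auto
  moreover have "finite ((\<lambda>t. CNOT x t) -` set ops)"
    by (rule finite_vimageI) (auto simp: inj_def)
  ultimately show ?thesis by (rule finite_subset)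
qed

lemma fold_cnot:
  assumes "distinct ops" "\<forall>p\<in>set ops. \<exists>c t. p = CNOT c t"
    "\<And>c t c' t'. CNOT c t \<in> set ops \<Longrightarrow> CNOT c' t' \<in> set ops \<Longrightarrow> c \<noteq> t'"
  shows "fold apply_op ops (fx, fz) =
     (\<lambda>x. fx x \<noteq> odd (card {c. CNOT c x \<in> set ops \<and> fx c}),
      \<lambda>x. fz x \<noteq> odd (card {t. CNOT x t \<in> set ops \<and> fz t}))"
  using assms
proof (induction ops arbitrary: fx fz)
  case Nil
  then show ?case by simp
next
  case (Cons a ops)
  then obtain c t where a: "a = CNOT c t" by auto
  define fx1 where "fx1 = fx(t := fx t \<noteq> fx c)"
  define fz1 where "fz1 = fz(c := fz c \<noteq> fz t)"
  have ct: "c \<noteq> t" using Cons.prems(3)[of c t c t] a by simp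
  have IH: "fold apply_op ops (fx1, fz1) =
     (\<lambda>x. fx1 x \<noteq> odd (card {c. CNOT c x \<in> set ops \<and> fx1 c}),
      \<lambda>x. fz1 x \<noteq> odd (card {t. CNOT x t \<in> set ops \<and> fz1 t}))"
  proof (rule Cons.IH)
    show "distinct ops" using Cons.prems(1) by simp
    show "\<forall>p\<in>set ops. \<exists>c t. p = CNOT c t" using Cons.prems(2) by simp
    show "\<And>c t c' t'. CNOT c t \<in> set ops \<Longrightarrow> CNOT c' t' \<in> set ops \<Longrightarrow> c \<noteq> t'"
    proof -
      fix c t c' t'
      assume "CNOT c t \<in> set ops" "CNOT c' t' \<in> set ops"
      then show "c \<noteq> t'" using Cons.prems(3)[of c t c' t'] by simp
    qed
  qed
  have nin: "a \<notin> set ops" using Cons.prems(1) by simp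
  have s1: "{c'. CNOT c' x \<in> set ops \<and> fx1 c'} = {c'. CNOT c' x \<in> set ops \<and> fx c'}" for x
  proof -
    have "CNOT c' x \<in> set ops \<Longrightarrow> c' \<noteq> t" for c'
      using Cons.prems(3)[of c' x c t] a by auto
    then show ?thesis unfolding fx1_def by auto
  qed
  have s2: "{t'. CNOT x t' \<in> set ops \<and> fz1 t'} = {t'. CNOT x t' \<in> set ops \<and> fz t'}" for x
  proof -
    have "CNOT x t' \<in> set ops \<Longrightarrow> t' \<noteq> c" for t'
      using Cons.prems(3)[of c t x t'] a by auto
    then show ?thesis unfolding fz1_def by auto
  qed
  have c1: "{c'. CNOT c' x \<in> set (a # ops) \<and> fx c'} =
      (if x = t \<and> fx c then insert c {c'. CNOT c' x \<in> set ops \<and> fx c'} else {c'. CNOT c' x \<in> set ops \<and> fx c'})" for x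
    using a by auto
  have c2: "{t'. CNOT x t' \<in> set (a # ops) \<and> fz t'} =
      (if x = c \<and> fz t then insert t {t'. CNOT x t' \<in> set ops \<and> fz t'} else {t'. CNOT x t' \<in> set ops \<and> fz t'})" for x
    using a by auto
  have n1: "c \<notin> {c'. CNOT c' t \<in> set ops \<and> fx c'}" using nin a by auto
  have n2: "t \<notin> {t'. CNOT c t' \<in> set ops \<and> fz t'}" using nin a by auto
  have "fold apply_op (a # ops) (fx, fz) = fold apply_op ops (fx1, fz1)"
    using a by (simp add: fx1_def fz1_def)
  also have "\<dots> = (\<lambda>x. fx x \<noteq> odd (card {c. CNOT c x \<in> set (a # ops) \<and> fx c}),
      \<lambda>x. fz x \<noteq> odd (card {t. CNOT x t \<in> set (a # ops) \<and> fz t}))"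
    unfolding IH s1 s2
  proof (intro prod_eqI ext; simp only: fst_conv snd_conv)
    fix x
    have f1: "fx1 x = (fx x \<noteq> (x = t \<and> fx c))" unfolding fx1_def by auto
    have k1: "card {c'. CNOT c' x \<in> set (a # ops) \<and> fx c'} =
       (if x = t \<and> fx c then Suc (card {c'. CNOT c' x \<in> set ops \<and> fx c'}) else card {c'. CNOT c' x \<in> set ops \<and> fx c'})"
    proof (cases "x = t \<and> fx c")
      case True
      then show ?thesis unfolding c1 using card_insert_disjoint[OF fin_ctrl[of t ops fx] n1] by simp
    next
      case False
      show ?thesis unfolding c1 if_not_P[OF False] by (rule refl)
    qed
    show "(fx1 x \<noteq> odd (card {c'. CNOT c' x \<in> set ops \<and> fx c'})) =
          (fx x \<noteq> odd (card {c. CNOT c x \<in> set (a # ops) \<and> fx c}))"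
      unfolding f1 k1 by auto
    have f2: "fz1 x = (fz x \<noteq> (x = c \<and> fz t))" unfolding fz1_def by auto
    have k2: "card {t'. CNOT x t' \<in> set (a # ops) \<and> fz t'} =
       (if x = c \<and> fz t then Suc (card {t'. CNOT x t' \<in> set ops \<and> fz t'}) else card {t'. CNOT x t' \<in> set ops \<and> fz t'})"
    proof (cases "x = c \<and> fz t")
      case True
      then show ?thesis unfolding c2 using card_insert_disjoint[OF fin_targ[of c ops fz] n2] by simp
    next
      case False
      show ?thesis unfolding c2 if_not_P[OF False] by (rule refl)
    qed
    show "(fz1 x \<noteq> odd (card {t'. CNOT x t' \<in> set ops \<and> fz t'})) =
          (fz x \<noteq> odd (card {t. CNOT x t \<in> set (a # ops) \<and> fz t}))"
      unfolding f2 k2 by auto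
  qed
  finally show ?case .
qed

lemma distinct_concat_ne:
  assumes "distinct (concat (map f xs))" "\<forall>x\<in>set xs. f x \<noteq> []"
  shows "distinct xs"
proof -
  have "distinct (removeAll [] (map f xs))" using assms(1) distinct_concat_iff by blast
  moreover have "[] \<notin> set (map f xs)" using assms(2) by auto
  then have "removeAll [] (map f xs) = map f xs" by (rule removeAll_id)
  ultimately have "distinct (map f xs)" by simp
  then show ?thesis by (simp add: distinct_map)
qed

lemma HX_lt: "HX i q \<Longrightarrow> q < 144 \<and> i < 72" unfolding HX_def by auto
lemma HZ_lt: "HZ j q \<Longrightarrow> q < 144 \<and> j < 72" unfolding HZ_def by auto

definition st1 :: "sched \<Rightarrow> nat \<Rightarrow> (nat \<Rightarrow> bool) \<Rightarrow> nat \<Rightarrow> bool" where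
  "st1 s \<tau> fx = (\<lambda>x. fx x \<and> \<not> (\<exists>i<72. x = xanc i \<and> pX s i = \<tau>))"
definition st2 :: "sched \<Rightarrow> nat \<Rightarrow> (nat \<Rightarrow> bool) \<Rightarrow> nat \<Rightarrow> bool" where
  "st2 s \<tau> fx = (\<lambda>x. st1 s \<tau> fx x \<noteq> odd (card {i. i < 72 \<and> HX i x \<and> cX s i x = \<tau> \<and> st1 s \<tau> fx (xanc i)}))"
definition st4 :: "sched \<Rightarrow> nat \<Rightarrow> (nat \<Rightarrow> bool) \<Rightarrow> nat \<Rightarrow> bool" where
  "st4 s \<tau> fx = (\<lambda>x. st2 s \<tau> fx x \<and> \<not> (\<exists>j<72. x = zanc j \<and> pZ s j = \<tau>))"
definition stepx :: "sched \<Rightarrow> nat \<Rightarrow> (nat \<Rightarrow> bool) \<Rightarrow> nat \<Rightarrow> bool" where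
  "stepx s \<tau> fx = (\<lambda>x. st4 s \<tau> fx x \<noteq> odd (card {q. \<exists>j<72. x = zanc j \<and> HZ j q \<and> cZ s j q = \<tau> \<and> st4 s \<tau> fx q}))"

lemma step_lemma:
  assumes "sec_valid s" "\<tau> < T s"
  shows "apply_step (round_step s \<tau>) (fx, nz) = (stepx s \<tau> fx, nz)"
proof -
  define L1 where "L1 = [PrepX (xanc i). i \<leftarrow> [0..<72], pX s i = \<tau>]"
  define L2 where "L2 = [CNOT (xanc i) q. i \<leftarrow> [0..<72], q \<leftarrow> [0..<144], HX i q \<and> cX s i q = \<tau>]"
  define L3 where "L3 = [MeasX (xanc i). i \<leftarrow> [0..<72], mX s i = \<tau>]"
  define L4 where "L4 = [PrepZ (zanc j). j \<leftarrow> [0..<72], pZ s j = \<tau>]"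
  define L5 where "L5 = [CNOT q (zanc j). j \<leftarrow> [0..<72], q \<leftarrow> [0..<144], HZ j q \<and> cZ s j q = \<tau>]"
  define L6 where "L6 = [MeasZ (zanc j). j \<leftarrow> [0..<72], mZ s j = \<tau>]"
  have rs: "round_step s \<tau> = L1 @ L2 @ L3 @ L4 @ L5 @ L6"
    unfolding round_step_def L1_def L2_def L3_def L4_def L5_def L6_def by (rule refl)
  have "distinct (concat (map op_qubits (round_step s \<tau>)))"
    using assms unfolding sec_valid_def by blast
  moreover have "\<forall>p\<in>set (round_step s \<tau>). op_qubits p \<noteq> []"
  proof
    fix p show "op_qubits p \<noteq> []" by (cases p) auto
  qed
  ultimately have dist: "distinct (round_step s \<tau>)" by (rule distinct_concat_ne)
  have d2: "distinct L2" and d5: "distinct L5" using dist unfolding rs by auto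
  have s1: "fold apply_op L1 (fx, nz) = (st1 s \<tau> fx, nz)"
  proof -
    have "\<forall>p\<in>set L1. \<exists>q. p = PrepX q \<or> p = PrepZ q" unfolding L1_def by auto
    moreover have "(\<Union>p\<in>set L1. set (op_qubits p)) = {x. \<exists>i<72. x = xanc i \<and> pX s i = \<tau>}"
      unfolding L1_def by auto
    ultimately show ?thesis by (simp add: fold_prep st1_def)
  qed
  have s2: "fold apply_op L2 (st1 s \<tau> fx, nz) = (st2 s \<tau> fx, nz)"
  proof -
    have "\<forall>p\<in>set L2. \<exists>c t. p = CNOT c t" unfolding L2_def by auto
    moreover have "\<And>c t c' t'. CNOT c t \<in> set L2 \<Longrightarrow> CNOT c' t' \<in> set L2 \<Longrightarrow> c \<noteq> t'"
      unfolding L2_def by (auto simp: xanc_def)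
    moreover have "{c. CNOT c x \<in> set L2 \<and> st1 s \<tau> fx c} = xanc ` {i. i < 72 \<and> HX i x \<and> cX s i x = \<tau> \<and> st1 s \<tau> fx (xanc i)}" for x
      unfolding L2_def using HX_lt by auto
    moreover have "inj xanc" unfolding xanc_def by (auto simp: inj_def)
    ultimately show ?thesis using d2 by (simp add: fold_cnot st2_def card_image inj_on_subset[of xanc UNIV])
  qed
  have s3: "fold apply_op L3 f = f" for f
    by (rule fold_meas) (auto simp: L3_def)
  have s4: "fold apply_op L4 (st2 s \<tau> fx, nz) = (st4 s \<tau> fx, nz)"
  proof -
    have "\<forall>p\<in>set L4. \<exists>q. p = PrepX q \<or> p = PrepZ q" unfolding L4_def by auto
    moreover have "(\<Union>p\<in>set L4. set (op_qubits p)) = {x. \<exists>j<72. x = zanc j \<and> pZ s j = \<tau>}"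
      unfolding L4_def by auto
    ultimately show ?thesis by (simp add: fold_prep st4_def)
  qed
  have s5: "fold apply_op L5 (st4 s \<tau> fx, nz) = (stepx s \<tau> fx, nz)"
  proof -
    have "\<forall>p\<in>set L5. \<exists>c t. p = CNOT c t" unfolding L5_def by auto
    moreover have "\<And>c t c' t'. CNOT c t \<in> set L5 \<Longrightarrow> CNOT c' t' \<in> set L5 \<Longrightarrow> c \<noteq> t'"
      unfolding L5_def by (auto simp: zanc_def)
    moreover have "{c. CNOT c x \<in> set L5 \<and> st4 s \<tau> fx c} = {q. \<exists>j<72. x = zanc j \<and> HZ j q \<and> cZ s j q = \<tau> \<and> st4 s \<tau> fx q}" for x
      unfolding L5_def using HZ_lt by auto
    ultimately show ?thesis using d5 by (simp add: fold_cnot stepx_def)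
  qed
  have s6: "fold apply_op L6 f = f" for f
    by (rule fold_meas) (auto simp: L6_def)
  show ?thesis
    unfolding apply_step_def rs by (simp add: s1 s2 s3 s4 s5 s6)
qed

lemma xanc_ne: "xanc i \<noteq> q \<or> q \<ge> 144" and zanc_ne: "zanc j \<noteq> q \<or> q \<ge> 216"
  unfolding xanc_def zanc_def by auto

lemma st1_lt: "x < 144 \<Longrightarrow> st1 s \<tau> fx x = fx x"
  unfolding st1_def xanc_def by auto
lemma st1_ge: "x \<ge> 216 \<Longrightarrow> st1 s \<tau> fx x = fx x"
  unfolding st1_def xanc_def by auto
lemma st2_ge: "x \<ge> 144 \<Longrightarrow> st2 s \<tau> fx x = st1 s \<tau> fx x"
proof -
  assume "x \<ge> 144"
  then have e: "{i. i < 72 \<and> HX i x \<and> cX s i x = \<tau> \<and> st1 s \<tau> fx (xanc i)} = {}" using HX_lt by fastforce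
  show ?thesis unfolding st2_def e by simp
qed
lemma st4_lt: "x < 216 \<Longrightarrow> st4 s \<tau> fx x = st2 s \<tau> fx x"
  unfolding st4_def zanc_def by auto
lemma stepx_nonz: "\<not> (\<exists>j<72. x = zanc j) \<Longrightarrow> stepx s \<tau> fx x = st4 s \<tau> fx x"
proof -
  assume "\<not> (\<exists>j<72. x = zanc j)"
  then have e: "{q. \<exists>j<72. x = zanc j \<and> HZ j q \<and> cZ s j q = \<tau> \<and> st4 s \<tau> fx q} = {}" by auto
  show ?thesis unfolding stepx_def e by simp
qed

lemma stepx_data: "x < 144 \<Longrightarrow> stepx s \<tau> fx x =
   (fx x \<noteq> odd (card {i. i < 72 \<and> HX i x \<and> cX s i x = \<tau> \<and> fx (xanc i) \<and> pX s i \<noteq> \<tau>}))"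
proof -
  assume x: "x < 144"
  have "\<not> (\<exists>j<72. x = zanc j)" using x unfolding zanc_def by auto
  then have "stepx s \<tau> fx x = st2 s \<tau> fx x" using x by (simp add: stepx_nonz st4_lt)
  moreover have "st1 s \<tau> fx (xanc i) = (fx (xanc i) \<and> pX s i \<noteq> \<tau>)" if "i < 72" for i
    using that unfolding st1_def xanc_def by auto
  then have e: "{i. i < 72 \<and> HX i x \<and> cX s i x = \<tau> \<and> st1 s \<tau> fx (xanc i)} =
     {i. i < 72 \<and> HX i x \<and> cX s i x = \<tau> \<and> fx (xanc i) \<and> pX s i \<noteq> \<tau>}" by auto
  ultimately show ?thesis unfolding st2_def e using x st1_lt by simp
qed

lemma stepx_xanc: "i < 72 \<Longrightarrow> stepx s \<tau> fx (xanc i) = (fx (xanc i) \<and> pX s i \<noteq> \<tau>)"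
proof -
  assume i: "i < 72"
  have "\<not> (\<exists>j<72. xanc i = zanc j)" using i unfolding zanc_def xanc_def by auto
  then have "stepx s \<tau> fx (xanc i) = st2 s \<tau> fx (xanc i)" using i by (simp add: stepx_nonz st4_lt xanc_def)
  also have "\<dots> = st1 s \<tau> fx (xanc i)" by (rule st2_ge) (simp add: xanc_def)
  also have "\<dots> = (fx (xanc i) \<and> pX s i \<noteq> \<tau>)" using i unfolding st1_def xanc_def by auto
  finally show ?thesis .
qed

lemma stepx_other: "x \<ge> 288 \<Longrightarrow> stepx s \<tau> fx x = fx x"
proof -
  assume x: "x \<ge> 288"
  have "\<not> (\<exists>j<72. x = zanc j)" using x unfolding zanc_def by auto
  then have "stepx s \<tau> fx x = st4 s \<tau> fx x" by (rule stepx_nonz)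
  also have "\<dots> = st2 s \<tau> fx x" using x unfolding st4_def zanc_def by auto
  also have "\<dots> = st1 s \<tau> fx x" using x by (simp add: st2_ge)
  also have "\<dots> = fx x" using x by (simp add: st1_ge)
  finally show ?thesis .
qed

lemma stepx_zanc: "j < 72 \<Longrightarrow> stepx s \<tau> fx (zanc j) =
   ((fx (zanc j) \<and> pZ s j \<noteq> \<tau>) \<noteq> odd (card {q. HZ j q \<and> cZ s j q = \<tau> \<and> stepx s \<tau> fx q}))"
proof -
  assume j: "j < 72"
  have a: "st4 s \<tau> fx (zanc j) = (fx (zanc j) \<and> pZ s j \<noteq> \<tau>)"
  proof -
    have "st2 s \<tau> fx (zanc j) = st1 s \<tau> fx (zanc j)" by (rule st2_ge) (simp add: zanc_def)
    also have "\<dots> = fx (zanc j)" by (rule st1_ge) (simp add: zanc_def)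
    finally show ?thesis unfolding st4_def using j by (auto simp: zanc_def)
  qed
  have b: "{q. \<exists>j'<72. zanc j = zanc j' \<and> HZ j' q \<and> cZ s j' q = \<tau> \<and> st4 s \<tau> fx q} =
           {q. HZ j q \<and> cZ s j q = \<tau> \<and> stepx s \<tau> fx q}"
  proof -
    have "HZ j q \<Longrightarrow> st4 s \<tau> fx q = stepx s \<tau> fx q" for q
    proof -
      assume "HZ j q"
      then have q: "q < 144" using HZ_lt by blast
      then have "\<not> (\<exists>j<72. q = zanc j)" unfolding zanc_def by auto
      then show ?thesis by (simp add: stepx_nonz)
    qed
    then show ?thesis using j by (auto simp: zanc_def)
  qed
  show ?thesis unfolding stepx_def[of s \<tau> fx] a b by simp
qed

lemma stepx_nz: "stepx s \<tau> nz = nz"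
proof
  fix x
  show "stepx s \<tau> nz x = False"
  proof (cases "x < 144")
    case True
    then show ?thesis by (simp add: stepx_data)
  next
    case False
    note F = this
    show ?thesis
    proof (cases "x < 216")
      case True
      define i where "i = x - 144"
      have "i < 72" "x = xanc i" using F True unfolding i_def xanc_def by simp_all
      then show ?thesis by (simp add: stepx_xanc)
    next
      case False
      note F2 = this
      show ?thesis
      proof (cases "x < 288")
        case True
        define j where "j = x - 216"
        have j: "j < 72" "x = zanc j" using F2 True unfolding j_def zanc_def by simp_all
        have e: "{q. HZ j q \<and> cZ s j q = \<tau> \<and> stepx s \<tau> nz q} = {}"
        proof -
          have "HZ j q \<Longrightarrow> stepx s \<tau> nz q = False" for q using HZ_lt[of j q] by (simp add: stepx_data)
          then show ?thesis by auto
        qed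
        show ?thesis using j by (simp add: stepx_zanc e)
      next
        case False
        then show ?thesis by (simp add: stepx_other)
      qed
    qed
  qed
qed

lemma concat_rep_nth: "n < r * length l \<Longrightarrow> concat (replicate r l) ! n = l ! (n mod length l)"
proof (induction r arbitrary: n)
  case 0
  then show ?case by simp
next
  case (Suc r)
  show ?case
  proof (cases "n < length l")
    case True
    then show ?thesis by (simp add: nth_append)
  next
    case False
    then have "n - length l < r * length l" using Suc.prems by auto
    then have "concat (replicate r l) ! (n - length l) = l ! ((n - length l) mod length l)" by (rule Suc.IH)
    moreover have "(n - length l) mod length l = n mod length l" using False by (simp add: le_mod_geq)
    ultimately show ?thesis using False by (simp add: nth_append)
  qed
qed

lemma len_rs: "length (round_steps s) = T s" unfolding round_steps_def by simp

lemma len_cr: "length (concat (replicate r l)) = r * length l"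
  by (induction r) auto

lemma mem_len: "length (memory False s r) = r * T s + 2"
  unfolding memory_def by (simp add: len_rs len_cr)

lemma mem0: "memory False s r ! 0 = map PrepZ [0..<144]"
  unfolding memory_def by simp

lemma memk: "1 \<le> k \<Longrightarrow> k \<le> r * T s \<Longrightarrow> memory False s r ! k = round_step s ((k - 1) mod T s)"
proof -
  assume k: "1 \<le> k" "k \<le> r * T s"
  then have T: "T s > 0" by (metis gr0I mult_0_right not_one_le_zero le_zero_eq)
  have "memory False s r ! k = concat (replicate r (round_steps s)) ! (k - 1)"
  proof -
    have "k - 1 < r * T s" using k by linarith
    then show ?thesis using k unfolding memory_def by (simp add: nth_append len_rs len_cr)
  qed
  also have "\<dots> = round_steps s ! ((k - 1) mod T s)"
    using k by (subst concat_rep_nth) (auto simp: len_rs)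
  also have "\<dots> = round_step s ((k - 1) mod T s)"
    using T unfolding round_steps_def by simp
  finally show ?thesis .
qed

lemma memlast: "memory False s r ! (r * T s + 1) = map MeasZ [0..<144]"
  unfolding memory_def by (simp add: nth_append len_rs len_cr)
lemma memlast': "memory False s r ! Suc (r * T s) = map MeasZ [0..<144]"
  using memlast by simp

definition addx :: "mech set \<Rightarrow> nat \<Rightarrow> (nat \<Rightarrow> bool) \<Rightarrow> nat \<Rightarrow> bool" where
  "addx F k fx = (\<lambda>q. fx q \<noteq> odd (card {m \<in> F. \<exists>px pz. m = Ins k px pz \<and> px q}))"

definition nopz :: "mech set \<Rightarrow> bool" where
  "nopz F \<longleftrightarrow> (\<forall>k px pz. Ins k px pz \<in> F \<longrightarrow> pz = nopauli)"

definition noflip :: "mech set \<Rightarrow> bool" where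
  "noflip F \<longleftrightarrow> (\<forall>k q. Flip k q \<notin> F)"

lemma add_ins_nz: "nopz F \<Longrightarrow> add_ins F k (fx, nz) = (addx F k fx, nz)"
proof -
  assume "nopz F"
  then have e: "{m \<in> F. \<exists>px pz. m = Ins k px pz \<and> pz q} = {}" for q
    unfolding nopz_def nopauli_def by auto
  show ?thesis unfolding add_ins_def addx_def e by simp
qed

lemma frame_gen:
  assumes sv: "sec_valid s" and np: "nopz F"
    and h1: "G 1 = addx F 0 nz"
    and hs: "\<And>k. 1 \<le> k \<Longrightarrow> k \<le> r * T s \<Longrightarrow> G (Suc k) = addx F k (stepx s ((k - 1) mod T s) (G k))"
  shows "1 \<le> k \<Longrightarrow> k \<le> r * T s + 1 \<Longrightarrow> frame_at (memory False s r) F k = (G k, nz)"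
proof (induction k)
  case 0
  then show ?case by simp
next
  case (Suc k)
  show ?case
  proof (cases "k = 0")
    case True
    have "apply_step (map PrepZ [0..<144]) (nz, nz) = (nz, nz)"
      unfolding apply_step_def by (subst fold_prep) auto
    then show ?thesis using True h1 add_ins_nz[OF np] by (simp add: mem0)
  next
    case False
    then have k: "1 \<le> k" "k \<le> r * T s" using Suc.prems by auto
    then have T: "(k - 1) mod T s < T s" by (metis gr0I mod_less_divisor mult_0_right not_one_le_zero le_zero_eq)
    have "frame_at (memory False s r) F (Suc k) = add_ins F k (apply_step (round_step s ((k - 1) mod T s)) (G k, nz))"
      using Suc.IH k by (simp add: memk)
    also have "\<dots> = (G (Suc k), nz)"
      using step_lemma[OF sv T] add_ins_nz[OF np] hs[OF k] by simp
    finally show ?thesis .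
  qed
qed

lemma measZ_rs: "MeasZ q \<in> set (round_step s \<tau>) \<longleftrightarrow> (\<exists>j<72. q = zanc j \<and> mZ s j = \<tau>)"
  unfolding round_step_def by auto

lemma flipped_gen:
  assumes nf: "noflip F"
    and fr: "\<And>k. 1 \<le> k \<Longrightarrow> k \<le> r * T s + 1 \<Longrightarrow> frame_at (memory False s r) F k = (G k, nz)"
    and zm: "\<And>k j. 1 \<le> k \<Longrightarrow> k \<le> r * T s \<Longrightarrow> j < 72 \<Longrightarrow> mZ s j = (k - 1) mod T s \<Longrightarrow> \<not> G k (zanc j)"
  shows "flipped (memory False s r) F = {(r * T s + 1, q) | q. q < 144 \<and> G (r * T s + 1) q}"
proof -
  have fl: "{m \<in> F. m = Flip k q} = {}" for k q using nf unfolding noflip_def by auto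
  have "(k, q) \<in> flipped (memory False s r) F \<longleftrightarrow> k = r * T s + 1 \<and> q < 144 \<and> G (r * T s + 1) q" for k q
  proof (cases "k = 0")
    case True
    then show ?thesis unfolding flipped_def outcomes_def by (auto simp: mem0)
  next
    case False
    show ?thesis
    proof (cases "k \<le> r * T s")
      case True
      have m: "memory False s r ! k = round_step s ((k - 1) mod T s)" using False True by (simp add: memk)
      have "\<not> (MeasZ q \<in> set (memory False s r ! k) \<and> fst (frame_at (memory False s r) F k) q)"
        using zm[of k] fr[of k] False True unfolding m measZ_rs by auto
      moreover have "snd (frame_at (memory False s r) F k) q = False" using fr[of k] False True by simp
      ultimately show ?thesis using True unfolding flipped_def fl by auto
    next
      case False
      note F2 = this
      show ?thesis
      proof (cases "k = r * T s + 1")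
        case True
        then show ?thesis using fr[of k] unfolding flipped_def outcomes_def fl by (auto simp: memlast memlast' mem_len)
      next
        case False
        then have "k \<ge> length (memory False s r)" using F2 by (simp add: mem_len)
        then show ?thesis using False unfolding flipped_def outcomes_def by auto
      qed
    qed
  qed
  then show ?thesis by auto
qed

lemma sv_X: "sec_valid s \<Longrightarrow> HX i q \<Longrightarrow> pX s i < cX s i q \<and> cX s i q < mX s i \<and> mX s i < T s"
  unfolding sec_valid_def using HX_lt by blast
lemma sv_Z: "sec_valid s \<Longrightarrow> HZ j q \<Longrightarrow> pZ s j < cZ s j q \<and> cZ s j q < mZ s j \<and> mZ s j < T s"
  unfolding sec_valid_def using HZ_lt by blast
lemma sv_Z2: "sec_valid s \<Longrightarrow> j < 72 \<Longrightarrow> pZ s j < mZ s j \<and> mZ s j < T s"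
  unfolding sec_valid_def by blast

definition Pz :: "sched \<Rightarrow> (nat \<Rightarrow> bool) \<Rightarrow> nat \<Rightarrow> nat \<Rightarrow> bool" where
  "Pz s e j t = odd (card {q. HZ j q \<and> e q \<and> cZ s j q < t})"

lemma finHZ: "finite {q. HZ j q \<and> P q}"
  by (rule finite_subset[of _ "{..<144}"]) (auto dest: HZ_lt)

lemma Pz_nz: "\<not> Pz s nz j t" unfolding Pz_def by simp

lemma Pz_step:
  assumes sv: "sec_valid s"
  shows "((Pz s e j \<tau> \<and> pZ s j \<noteq> \<tau>) \<noteq> odd (card {q. HZ j q \<and> cZ s j q = \<tau> \<and> e q})) = Pz s e j (Suc \<tau>)"
proof (cases "pZ s j = \<tau>")
  case True
  have e1: "{q. HZ j q \<and> cZ s j q = \<tau> \<and> e q} = {}" using sv_Z[OF sv] True by fastforce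
  have e2: "{q. HZ j q \<and> e q \<and> cZ s j q < Suc \<tau>} = {}" using sv_Z[OF sv] True by fastforce
  show ?thesis using True unfolding Pz_def e1 e2 by simp
next
  case False
  have u: "{q. HZ j q \<and> e q \<and> cZ s j q < Suc \<tau>} = {q. HZ j q \<and> e q \<and> cZ s j q < \<tau>} \<union> {q. HZ j q \<and> cZ s j q = \<tau> \<and> e q}"
    by auto
  have "card {q. HZ j q \<and> e q \<and> cZ s j q < Suc \<tau>} = card {q. HZ j q \<and> e q \<and> cZ s j q < \<tau>} + card {q. HZ j q \<and> cZ s j q = \<tau> \<and> e q}"
    unfolding u by (rule card_Un_disjoint) (auto intro: finHZ)
  then show ?thesis using False unfolding Pz_def by auto
qed

lemma Pz_full:
  assumes sv: "sec_valid s" and ker: "in_kernel HZ e" and j: "j < 72" and t: "mZ s j \<le> t"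
  shows "\<not> Pz s e j t"
proof -
  have "{q. HZ j q \<and> e q \<and> cZ s j q < t} = {q. q < 144 \<and> HZ j q \<and> e q}"
    using sv_Z[OF sv, of j] t HZ_lt by fastforce
  then show ?thesis using ker j unfolding Pz_def in_kernel_def by simp
qed

lemma Pz_low:
  assumes sv: "sec_valid s" and t: "t \<le> Suc (pZ s j)"
  shows "\<not> Pz s e j t"
proof -
  have e1: "{q. HZ j q \<and> e q \<and> cZ s j q < t} = {}" using sv_Z[OF sv, of j] t by fastforce
  show ?thesis unfolding Pz_def e1 by simp
qed

definition Gf :: "sched \<Rightarrow> (nat \<Rightarrow> bool) \<Rightarrow> (nat \<Rightarrow> bool) \<Rightarrow> bool \<Rightarrow> nat \<Rightarrow> nat \<Rightarrow> bool" where
  "Gf s e D a t = (\<lambda>x. (x < 144 \<and> D x) \<or> (x = xanc 0 \<and> a) \<or> (216 \<le> x \<and> x < 288 \<and> Pz s e (x - 216) t))"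

lemma Gf_data: "x < 144 \<Longrightarrow> Gf s e D a t x = D x" unfolding Gf_def xanc_def by auto
lemma Gf_xanc: "i < 72 \<Longrightarrow> Gf s e D a t (xanc i) = (i = 0 \<and> a)" unfolding Gf_def xanc_def by auto
lemma Gf_zanc: "j < 72 \<Longrightarrow> Gf s e D a t (zanc j) = Pz s e j t" unfolding Gf_def xanc_def zanc_def by auto
lemma Gf_other: "x \<ge> 288 \<Longrightarrow> Gf s e D a t x = False" unfolding Gf_def xanc_def by auto

lemma x_cases:
  obtains "x < 144" | i where "i < 72" "x = xanc i" | j where "j < 72" "x = zanc j" | "x \<ge> 288"
proof -
  consider "x < 144" | "144 \<le> x \<and> x < 216" | "216 \<le> x \<and> x < 288" | "x \<ge> 288" by linarith
  then show ?thesis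
  proof cases
    case 1 then show ?thesis using that by blast
  next
    case 2 then have "x - 144 < 72" "x = xanc (x - 144)" unfolding xanc_def by auto
    then show ?thesis using that by blast
  next
    case 3 then have "x - 216 < 72" "x = zanc (x - 216)" unfolding zanc_def by auto
    then show ?thesis using that by blast
  next
    case 4 then show ?thesis using that by blast
  qed
qed

lemma stepx_gen:
  assumes sv: "sec_valid s"
    and a: "a \<Longrightarrow> pX s 0 \<noteq> \<tau>"
    and z: "\<And>j q. j < 72 \<Longrightarrow> HZ j q \<Longrightarrow> cZ s j q = \<tau> \<Longrightarrow> ((D q \<noteq> (a \<and> HX 0 q \<and> cX s 0 q = \<tau>)) = e q)"
  shows "stepx s \<tau> (Gf s e D a \<tau>) = Gf s e (\<lambda>x. D x \<noteq> (a \<and> HX 0 x \<and> cX s 0 x = \<tau>)) a (Suc \<tau>)"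
proof
  fix x
  have data: "stepx s \<tau> (Gf s e D a \<tau>) q = (D q \<noteq> (a \<and> HX 0 q \<and> cX s 0 q = \<tau>))" if q: "q < 144" for q
  proof -
    have "{i. i < 72 \<and> HX i q \<and> cX s i q = \<tau> \<and> Gf s e D a \<tau> (xanc i) \<and> pX s i \<noteq> \<tau>} =
          (if a \<and> HX 0 q \<and> cX s 0 q = \<tau> then {0} else {})"
      using a by (auto simp: Gf_xanc)
    then show ?thesis using q by (simp add: stepx_data Gf_data)
  qed
  show "stepx s \<tau> (Gf s e D a \<tau>) x = Gf s e (\<lambda>x. D x \<noteq> (a \<and> HX 0 x \<and> cX s 0 x = \<tau>)) a (Suc \<tau>) x"
  proof (cases x rule: x_cases)
    case 1
    then show ?thesis by (simp add: data Gf_data)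
  next
    case (2 i)
    then show ?thesis using a by (auto simp: stepx_xanc Gf_xanc)
  next
    case (3 j)
    have "{q. HZ j q \<and> cZ s j q = \<tau> \<and> stepx s \<tau> (Gf s e D a \<tau>) q} = {q. HZ j q \<and> cZ s j q = \<tau> \<and> e q}"
      using z[OF 3(1)] data HZ_lt by blast
    then show ?thesis using 3 Pz_step[OF sv, of e j \<tau>] by (simp add: stepx_zanc Gf_zanc)
  next
    case 4
    then show ?thesis by (simp add: stepx_other Gf_other)
  qed
qed

lemma T_pos: "1 \<le> k \<Longrightarrow> k \<le> r * T s \<Longrightarrow> T s > 0"
  by (metis gr0I mult_0_right not_one_le_zero le_zero_eq)

lemma mod_last: "1 \<le> (r::nat) \<Longrightarrow> (r - 1) * Tn \<le> n \<Longrightarrow> n < r * Tn \<Longrightarrow> n mod Tn = n - (r - 1) * Tn"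
proof -
  assume a: "1 \<le> r" "(r - 1) * Tn \<le> n" "n < r * Tn"
  have rT: "r * Tn = (r - 1) * Tn + Tn" using a(1) by (metis add.commute le_add_diff_inverse mult.commute mult_Suc_right plus_1_eq_Suc)
  define m where "m = n - (r - 1) * Tn"
  have n: "n = m + (r - 1) * Tn" using a(2) unfolding m_def by simp
  have "m < Tn" using a(3) rT n by linarith
  then show ?thesis using n unfolding m_def[symmetric] by simp
qed

lemma single_addx: "addx {Ins 0 e nopauli} k fx = (if k = 0 then (\<lambda>q. fx q \<noteq> e q) else fx)"
proof -
  have "{m \<in> {Ins 0 e nopauli}. \<exists>px pz. m = Ins k px pz \<and> px q} = (if k = 0 \<and> e q then {Ins 0 e nopauli} else {})" for q
    by auto
  then show ?thesis unfolding addx_def by (auto intro!: ext)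
qed

lemma ref_frame:
  assumes sv: "sec_valid s" and ker: "in_kernel HZ e"
  shows "1 \<le> k \<Longrightarrow> k \<le> r * T s + 1 \<Longrightarrow>
    frame_at (memory False s r) {Ins 0 e nopauli} k = (Gf s e e False ((k - 1) mod T s), nz)"
proof (rule frame_gen[OF sv])
  show "nopz {Ins 0 e nopauli}" unfolding nopz_def by simp
  have ek: "e x \<Longrightarrow> x < 144" for x using ker unfolding in_kernel_def by blast
  show "Gf s e e False ((1 - 1) mod T s) = addx {Ins 0 e nopauli} 0 nz"
  proof
    fix x
    show "Gf s e e False ((1 - 1) mod T s) x = addx {Ins 0 e nopauli} 0 nz x"
    proof (cases x rule: x_cases)
      case (2 i)
      have "\<not> e x" using ek[of x] 2 unfolding xanc_def by auto
      then show ?thesis using 2 by (simp add: Gf_xanc single_addx)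
    next
      case (3 j)
      have "\<not> e x" using ek[of x] 3 unfolding zanc_def by auto
      then show ?thesis using 3 by (simp add: Gf_zanc Pz_low[OF sv] single_addx)
    next
      case 4
      have "\<not> e x" using ek[of x] 4 by auto
      then show ?thesis using 4 by (simp add: Gf_other single_addx)
    qed (simp add: Gf_data single_addx)
  qed
  fix k
  assume k: "1 \<le> k" "k \<le> r * T s"
  define \<tau> where "\<tau> = (k - 1) mod T s"
  have T0: "T s > 0" using T_pos k by blast
  have tT: "\<tau> < T s" unfolding \<tau>_def using T0 by simp
  have st: "stepx s \<tau> (Gf s e e False \<tau>) = Gf s e (\<lambda>x. e x \<noteq> (False \<and> HX 0 x \<and> cX s 0 x = \<tau>)) False (Suc \<tau>)"
    by (rule stepx_gen[OF sv]) auto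
  have km: "(Suc k - 1) mod T s = (if Suc \<tau> = T s then 0 else Suc \<tau>)"
  proof -
    have kk: "Suc k - 1 = Suc (k - 1)" using k by simp
    show ?thesis unfolding kk \<tau>_def by (rule mod_Suc)
  qed
  have GT: "Gf s e e False (T s) = Gf s e e False 0"
  proof
    fix x
    show "Gf s e e False (T s) x = Gf s e e False 0 x"
    proof (cases x rule: x_cases)
      case (3 j)
      have "\<not> Pz s e j (T s)" using Pz_full[OF sv ker 3(1)] sv_Z2[OF sv 3(1)] by simp
      moreover have "\<not> Pz s e j 0" using Pz_low[OF sv] by simp
      ultimately show ?thesis using 3 by (simp add: Gf_zanc)
    qed (auto simp: Gf_data Gf_xanc Gf_other)
  qed
  show "Gf s e e False ((Suc k - 1) mod T s) = addx {Ins 0 e nopauli} k (stepx s ((k - 1) mod T s) (Gf s e e False ((k - 1) mod T s)))"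
    unfolding single_addx \<tau>_def[symmetric] st km using k GT by auto
qed

definition hookF :: "nat \<Rightarrow> nat \<Rightarrow> (nat \<Rightarrow> bool) \<Rightarrow> (nat \<Rightarrow> bool) \<Rightarrow> mech set" where
  "hookF kh K e W = insert (Ins kh (single (xanc 0)) nopauli) ((\<lambda>q. Ins K (\<lambda>q'. q' = q) nopauli) ` {q. q < 144 \<and> e q \<and> \<not> W q})"

lemma hookF_nopz: "nopz (hookF kh K e W)" unfolding nopz_def hookF_def by auto
lemma hookF_noflip: "noflip (hookF kh K e W)" unfolding noflip_def hookF_def by auto

lemma hookF_addx:
  assumes "kh \<noteq> K"
  shows "addx (hookF kh K e W) k fx = (\<lambda>x. fx x \<noteq> ((k = kh \<and> x = xanc 0) \<or> (k = K \<and> x < 144 \<and> e x \<and> \<not> W x)))"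
proof
  fix x
  have "{m \<in> hookF kh K e W. \<exists>px pz. m = Ins k px pz \<and> px x} =
     (if k = kh \<and> x = xanc 0 then {Ins kh (single (xanc 0)) nopauli}
      else if k = K \<and> x < 144 \<and> e x \<and> \<not> W x then {Ins K (\<lambda>q'. q' = x) nopauli} else {})"
    using assms unfolding hookF_def single_def by auto
  then show "addx (hookF kh K e W) k fx x = (fx x \<noteq> ((k = kh \<and> x = xanc 0) \<or> (k = K \<and> x < 144 \<and> e x \<and> \<not> W x)))"
    unfolding addx_def using assms by auto
qed

lemma xanc_eq[simp]: "xanc i = xanc i' \<longleftrightarrow> i = i'" unfolding xanc_def by simp
lemma zanc_xanc[simp]: "zanc j \<noteq> xanc i'" "xanc i' \<noteq> zanc j" if "i' < 72" using that unfolding xanc_def zanc_def by simp_all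
lemma xanc_nlt[simp]: "\<not> xanc i < 144" unfolding xanc_def by simp
lemma zanc_nlt[simp]: "\<not> zanc i < 144" unfolding zanc_def by simp
lemma big_nx: "x \<ge> 288 \<Longrightarrow> x \<noteq> xanc 0" unfolding xanc_def by simp

definition Gzx :: "sched \<Rightarrow> nat \<Rightarrow> (nat \<Rightarrow> bool) \<Rightarrow> (nat \<Rightarrow> bool) \<Rightarrow> nat \<Rightarrow> nat \<Rightarrow> nat \<Rightarrow> bool" where
  "Gzx s r e W h k = (if k \<le> (r - 1) * T s + 1 + h then nz
     else if k \<le> r * T s then Gf s nz (\<lambda>x. W x \<and> cX s 0 x < k - 1 - (r - 1) * T s) True (k - 1 - (r - 1) * T s)
     else (\<lambda>x. x = xanc 0 \<or> (x < 144 \<and> e x)))"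

lemma zx_frame:
  assumes sv: "sec_valid s" and r: "1 \<le> r"
    and W: "\<And>q. W q \<longleftrightarrow> HX 0 q \<and> h < cX s 0 q" and We: "\<And>q. W q \<Longrightarrow> e q"
    and hp: "pX s 0 < h" and hT: "h + 2 \<le> T s"
    and zx: "\<And>i j q. HX i q \<Longrightarrow> HZ j q \<Longrightarrow> cZ s j q < cX s i q"
  shows "1 \<le> k \<Longrightarrow> k \<le> r * T s + 1 \<Longrightarrow>
    frame_at (memory False s r) (hookF ((r - 1) * T s + 1 + h) (r * T s) e W) k = (Gzx s r e W h k, nz)"
proof (rule frame_gen[OF sv hookF_nopz])
  define base where "base = (r - 1) * T s"
  have rT: "r * T s = base + T s" unfolding base_def using r
    by (metis add.commute le_add_diff_inverse mult.commute mult_Suc_right plus_1_eq_Suc)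
  have khK: "base + 1 + h \<noteq> r * T s" using rT hT by simp
  note ax = hookF_addx[OF khK[unfolded base_def]]
  have G: "Gzx s r e W h k = (if k \<le> base + 1 + h then nz
     else if k \<le> base + T s then Gf s nz (\<lambda>x. W x \<and> cX s 0 x < k - 1 - base) True (k - 1 - base)
     else (\<lambda>x. x = xanc 0 \<or> (x < 144 \<and> e x)))" for k
    unfolding Gzx_def base_def[symmetric] rT by simp
  show "Gzx s r e W h 1 = addx (hookF ((r - 1) * T s + 1 + h) (r * T s) e W) 0 nz"
    unfolding ax G using rT hT by (auto intro!: ext)
  fix k
  assume k: "1 \<le> k" "k \<le> r * T s"
  define \<tau> where "\<tau> = (k - 1) mod T s"
  have T0: "T s > 0" using hT by simp
  show "Gzx s r e W h (Suc k) = addx (hookF ((r - 1) * T s + 1 + h) (r * T s) e W) k (stepx s ((k - 1) mod T s) (Gzx s r e W h k))"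
  proof (cases "k < base + 1 + h")
    case True
    then show ?thesis unfolding ax G using rT hT by (auto simp: stepx_nz base_def intro!: ext)
  next
    case False
    note F1 = this
    show ?thesis
    proof (cases "k = base + 1 + h")
      case True
      have "Gf s nz (\<lambda>x. W x \<and> cX s 0 x < Suc k - 1 - base) True (Suc k - 1 - base) = (\<lambda>x. x = xanc 0)"
      proof
        fix x
        have sk: "Suc k - 1 - base = Suc h" using True by simp
        show "Gf s nz (\<lambda>x. W x \<and> cX s 0 x < Suc k - 1 - base) True (Suc k - 1 - base) x = (x = xanc 0)"
        proof (cases x rule: x_cases)
          case 1
          then show ?thesis using W[of x] unfolding sk by (auto simp: Gf_data)
        next
          case (2 i)
          then show ?thesis by (simp add: Gf_xanc)
        next
          case (3 j)
          then show ?thesis by (simp add: Gf_zanc Pz_nz)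
        next
          case 4
          then show ?thesis using big_nx[of x] by (simp add: Gf_other)
        qed
      qed
      then show ?thesis unfolding ax G using True rT hT khK by (auto simp: stepx_nz base_def intro!: ext)
    next
      case False
      then have k1: "base + 1 + h < k" using F1 by simp
      define t where "t = k - 1 - base"
      have tt: "\<tau> = t" unfolding \<tau>_def t_def base_def
        by (rule mod_last[OF r]) (use k1 k(2) in \<open>auto simp: base_def\<close>)
      have ht: "h < t" using k1 unfolding t_def by simp
      have tT: "t < T s" using k(2) rT k1 unfolding t_def by simp
      have Gk: "Gzx s r e W h k = Gf s nz (\<lambda>x. W x \<and> cX s 0 x < t) True t"
        unfolding G t_def using k1 k(2) rT by simp
      have st: "stepx s t (Gf s nz (\<lambda>x. W x \<and> cX s 0 x < t) True t) =
          Gf s nz (\<lambda>x. (W x \<and> cX s 0 x < t) \<noteq> (True \<and> HX 0 x \<and> cX s 0 x = t)) True (Suc t)"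
      proof (rule stepx_gen[OF sv])
        show "pX s 0 \<noteq> t" using hp ht by simp
        fix j q assume jq: "j < 72" "HZ j q" "cZ s j q = t"
        show "((W q \<and> cX s 0 q < t) \<noteq> (True \<and> HX 0 q \<and> cX s 0 q = t)) = nz q"
          using zx[of 0 q j] jq W[of q] by auto
      qed
      have D: "((W x \<and> cX s 0 x < t) \<noteq> (HX 0 x \<and> cX s 0 x = t)) = (W x \<and> cX s 0 x < Suc t)" for x
        using W[of x] ht by auto
      show ?thesis
      proof (cases "k = r * T s")
        case False
        have sk: "Suc k - 1 - base = Suc t" using k1 unfolding t_def by simp
        have "Gzx s r e W h (Suc k) = Gf s nz (\<lambda>x. W x \<and> cX s 0 x < Suc t) True (Suc t)"
          unfolding G sk using k1 k(2) rT False by simp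
        moreover have "\<not> (k = base + 1 + h)" using k1 by simp
        ultimately show ?thesis unfolding ax unfolding \<tau>_def[symmetric] tt Gk st base_def[symmetric] using False D by (simp add: D)
      next
        case True
        then have tl: "Suc t = T s" using rT unfolding t_def using k1 by simp
        have "Gzx s r e W h (Suc k) = (\<lambda>x. x = xanc 0 \<or> (x < 144 \<and> e x))"
          unfolding G using True rT hT by simp
        moreover have "Gf s nz (\<lambda>x. (W x \<and> cX s 0 x < t) \<noteq> (True \<and> HX 0 x \<and> cX s 0 x = t)) True (Suc t) x \<noteq>
              ((k = base + 1 + h \<and> x = xanc 0) \<or> (k = r * T s \<and> x < 144 \<and> e x \<and> \<not> W x)) \<longleftrightarrow>
             (x = xanc 0 \<or> (x < 144 \<and> e x))" for x
        proof (cases x rule: x_cases)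
          case 1
          have "W x \<Longrightarrow> cX s 0 x < T s" using W sv_X[OF sv, of 0 x] by auto
          then show ?thesis using 1 True k1 D[of x] tl We[of x] by (auto simp: Gf_data)
        next
          case (2 i)
          then show ?thesis using True khK by (auto simp: Gf_xanc)
        next
          case (3 j)
          then show ?thesis by (auto simp: Gf_zanc Pz_nz)
        next
          case 4
          then show ?thesis by (auto simp: Gf_other dest: big_nx)
        qed
        ultimately show ?thesis unfolding ax unfolding \<tau>_def[symmetric] tt Gk st base_def[symmetric] by (auto intro!: ext)
      qed
    qed
  qed
qed

definition Gxz :: "sched \<Rightarrow> nat \<Rightarrow> (nat \<Rightarrow> bool) \<Rightarrow> (nat \<Rightarrow> bool) \<Rightarrow> nat \<Rightarrow> nat \<Rightarrow> nat \<Rightarrow> bool" where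
  "Gxz s r e W h k = (if k \<le> (r - 1) * T s + 1 then nz
     else Gf s e (\<lambda>x. (e x \<and> \<not> W x) \<or> (W x \<and> cX s 0 x < k - 1 - (r - 1) * T s))
                 (h < k - 1 - (r - 1) * T s) (k - 1 - (r - 1) * T s))"

lemma xz_frame:
  assumes sv: "sec_valid s" and r: "1 \<le> r" and ker: "in_kernel HZ e"
    and W: "\<And>q. W q \<longleftrightarrow> HX 0 q \<and> h < cX s 0 q" and We: "\<And>q. W q \<Longrightarrow> e q"
    and hp: "pX s 0 < h" and hT: "h + 2 \<le> T s"
    and xz: "\<And>i j q. HX i q \<Longrightarrow> HZ j q \<Longrightarrow> cX s i q < cZ s j q"
  shows "1 \<le> k \<Longrightarrow> k \<le> r * T s + 1 \<Longrightarrow>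
    frame_at (memory False s r) (hookF ((r - 1) * T s + 1 + h) ((r - 1) * T s + 1) e W) k = (Gxz s r e W h k, nz)"
proof (rule frame_gen[OF sv hookF_nopz])
  define base where "base = (r - 1) * T s"
  have rT: "r * T s = base + T s" unfolding base_def using r
    by (metis add.commute le_add_diff_inverse mult.commute mult_Suc_right plus_1_eq_Suc)
  have khK: "base + 1 + h \<noteq> base + 1" using hp by simp
  note ax = hookF_addx[OF khK[unfolded base_def]]
  have G: "Gxz s r e W h k = (if k \<le> base + 1 then nz
     else Gf s e (\<lambda>x. (e x \<and> \<not> W x) \<or> (W x \<and> cX s 0 x < k - 1 - base)) (h < k - 1 - base) (k - 1 - base))" for k
    unfolding Gxz_def base_def[symmetric] by simp
  show "Gxz s r e W h 1 = addx (hookF ((r - 1) * T s + 1 + h) ((r - 1) * T s + 1) e W) 0 nz"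
    unfolding ax G by (auto intro!: ext)
  fix k
  assume k: "1 \<le> k" "k \<le> r * T s"
  define \<tau> where "\<tau> = (k - 1) mod T s"
  show "Gxz s r e W h (Suc k) = addx (hookF ((r - 1) * T s + 1 + h) ((r - 1) * T s + 1) e W) k (stepx s ((k - 1) mod T s) (Gxz s r e W h k))"
  proof (cases "k < base + 1")
    case True
    then show ?thesis unfolding ax G using hp by (auto simp: stepx_nz base_def intro!: ext)
  next
    case False
    note F1 = this
    show ?thesis
    proof (cases "k = base + 1")
      case True
      have sk: "Suc k - 1 - base = 1" using True by simp
      have "Gxz s r e W h (Suc k) = Gf s e (\<lambda>x. (e x \<and> \<not> W x) \<or> (W x \<and> cX s 0 x < 1)) (h < 1) 1"
        unfolding G sk using True by simp
      moreover have "Gf s e (\<lambda>x. (e x \<and> \<not> W x) \<or> (W x \<and> cX s 0 x < 1)) (h < 1) 1 x =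
          (nz x \<noteq> ((k = base + 1 + h \<and> x = xanc 0) \<or> (k = base + 1 \<and> x < 144 \<and> e x \<and> \<not> W x)))" for x
      proof (cases x rule: x_cases)
        case 1
        then show ?thesis using W[of x] True hp by (auto simp: Gf_data)
      next
        case (2 i)
        then show ?thesis using True hp by (simp add: Gf_xanc)
      next
        case (3 j)
        then show ?thesis using Pz_low[OF sv, of 1 j e] True by (simp add: Gf_zanc)
      next
        case 4
        then show ?thesis using big_nx[of x] True by (simp add: Gf_other)
      qed
      ultimately show ?thesis unfolding ax unfolding G base_def[symmetric] using True
        by (auto simp: stepx_nz intro!: ext)
    next
      case False
      then have k1: "base + 1 < k" using F1 by simp
      define t where "t = k - 1 - base"
      have tt: "\<tau> = t" unfolding \<tau>_def t_def base_def
        by (rule mod_last[OF r]) (use k1 k(2) in \<open>auto simp: base_def\<close>)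
      have t1: "1 \<le> t" using k1 unfolding t_def by simp
      have tT: "t < T s" using k(2) rT k1 unfolding t_def by simp
      have Gk: "Gxz s r e W h k = Gf s e (\<lambda>x. (e x \<and> \<not> W x) \<or> (W x \<and> cX s 0 x < t)) (h < t) t"
        unfolding G t_def using k1 by simp
      have st: "stepx s t (Gf s e (\<lambda>x. (e x \<and> \<not> W x) \<or> (W x \<and> cX s 0 x < t)) (h < t) t) =
          Gf s e (\<lambda>x. ((e x \<and> \<not> W x) \<or> (W x \<and> cX s 0 x < t)) \<noteq> (h < t \<and> HX 0 x \<and> cX s 0 x = t)) (h < t) (Suc t)"
      proof (rule stepx_gen[OF sv])
        show "h < t \<Longrightarrow> pX s 0 \<noteq> t" using hp by simp
        fix j q assume jq: "j < 72" "HZ j q" "cZ s j q = t"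
        show "(((e q \<and> \<not> W q) \<or> (W q \<and> cX s 0 q < t)) \<noteq> (h < t \<and> HX 0 q \<and> cX s 0 q = t)) = e q"
          using xz[of 0 q j] jq W[of q] We[of q] by auto
      qed
      have sk: "Suc k - 1 - base = Suc t" using k1 unfolding t_def by simp
      have GS: "Gxz s r e W h (Suc k) = Gf s e (\<lambda>x. (e x \<and> \<not> W x) \<or> (W x \<and> cX s 0 x < Suc t)) (h < Suc t) (Suc t)"
        unfolding G sk using k1 by simp
      have kh: "k = base + 1 + h \<longleftrightarrow> t = h" using k1 unfolding t_def by auto
      have "Gf s e (\<lambda>x. ((e x \<and> \<not> W x) \<or> (W x \<and> cX s 0 x < t)) \<noteq> (h < t \<and> HX 0 x \<and> cX s 0 x = t)) (h < t) (Suc t) x \<noteq>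
              ((k = base + 1 + h \<and> x = xanc 0) \<or> (k = base + 1 \<and> x < 144 \<and> e x \<and> \<not> W x)) \<longleftrightarrow>
            Gf s e (\<lambda>x. (e x \<and> \<not> W x) \<or> (W x \<and> cX s 0 x < Suc t)) (h < Suc t) (Suc t) x" for x
      proof (cases x rule: x_cases)
        case 1
        then show ?thesis using W[of x] k1 by (auto simp: Gf_data)
      next
        case (2 i)
        then show ?thesis using kh k1 by (auto simp: Gf_xanc)
      next
        case (3 j)
        then show ?thesis using k1 by (simp add: Gf_zanc)
      next
        case 4
        then show ?thesis using big_nx[of x] k1 by (simp add: Gf_other)
      qed
      then show ?thesis unfolding ax unfolding \<tau>_def[symmetric] tt Gk st GS base_def[symmetric]
        by (auto intro!: ext)
    qed
  qed
qed



section \<open>Explicit logical operators\<close>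

definition goodc :: "nat list \<Rightarrow> nat list \<Rightarrow> bool" where
  "goodc E V \<longleftrightarrow> distinct E \<and> list_all (\<lambda>q. q < 144) E \<and> list_all (\<lambda>q. distinct (nbZ q)) E \<and>
     paired (sort (concat (map nbZ E))) \<and>
     distinct V \<and> list_all (\<lambda>q. q < 144) V \<and> list_all (\<lambda>q. distinct (nbX q)) V \<and>
     paired (sort (concat (map nbX V))) \<and> length E = 12 \<and> odd (length (filter (\<lambda>q. q \<in> set V) E))"

lemma goodc_sound:
  assumes "goodc E V"
  shows "in_kernel HZ (\<lambda>q. q \<in> set E)" "in_kernel HX (\<lambda>q. q \<in> set V)" "card (set E) = 12"
    "odd (card {q. q < 144 \<and> q \<in> set E \<and> q \<in> set V})"
proof -
  have HZ': "HZ i q \<longleftrightarrow> q < 144 \<and> True \<and> i \<in> set (nbZ q)" for i q using HZ_nb by simp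
  show "in_kernel HZ (\<lambda>q. q \<in> set E)"
    by (rule kernel_nb[OF HZ']) (use assms in \<open>auto simp: goodc_def list_all_iff\<close>)
  have HX': "HX i q \<longleftrightarrow> q < 144 \<and> i < 72 \<and> i \<in> set (nbX q)" for i q using HX_nb by simp
  show "in_kernel HX (\<lambda>q. q \<in> set V)"
    by (rule kernel_nb[OF HX']) (use assms in \<open>auto simp: goodc_def list_all_iff\<close>)
  show "card (set E) = 12" using assms by (simp add: goodc_def distinct_card)
  have "{q. q < 144 \<and> q \<in> set E \<and> q \<in> set V} = set (filter (\<lambda>q. q \<in> set V) E)"
    using assms by (auto simp: goodc_def list_all_iff)
  moreover have "distinct E" using assms by (simp add: goodc_def)
  then have "card (set (filter (\<lambda>q. q \<in> set V) E)) = length (filter (\<lambda>q. q \<in> set V) E)"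
    by (intro distinct_card distinct_filter)
  ultimately show "odd (card {q. q < 144 \<and> q \<in> set E \<and> q \<in> set V})"
    using assms by (simp add: goodc_def)
qed

definition logtab :: "(nat list \<times> nat list) list" where
  "logtab = [
    ([1, 2, 4, 5, 67, 68, 70, 71, 139, 140, 142, 143], [2, 3, 20, 36, 37, 58, 84, 90, 96, 99, 102, 111]),
    ([1, 18, 25, 40, 71, 75, 82, 83, 100, 107, 123, 139], [24, 30, 31, 35, 37, 90, 97, 101, 105, 107, 110, 111]),
    ([1, 2, 10, 11, 14, 16, 20, 25, 75, 85, 86, 91], [0, 4, 14, 15, 22, 38, 54, 55, 80, 81, 89, 90]),
    ([1, 3, 7, 12, 60, 61, 69, 70, 72, 73, 78, 134], [1, 2, 17, 25, 32, 33, 57, 83, 85, 92, 107, 108]),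
    ([1, 17, 26, 67, 75, 76, 77, 84, 92, 102, 107, 124], [24, 30, 31, 35, 37, 90, 97, 101, 105, 107, 110, 111]),
    ([2, 9, 18, 26, 33, 42, 78, 83, 85, 102, 109, 131], [42, 46, 48, 49, 52, 53, 108, 112, 115, 119, 123, 125]),
    ([1, 2, 7, 9, 13, 17, 20, 75, 79, 80, 83, 86], [0, 4, 14, 15, 22, 38, 54, 55, 80, 81, 89, 90]),
    ([2, 5, 8, 10, 12, 14, 20, 72, 76, 77, 78, 86], [1, 2, 17, 25, 32, 33, 57, 83, 85, 92, 107, 108]),
    ([2, 16, 24, 38, 52, 60, 76, 84, 98, 112, 120, 134], [1, 2, 17, 25, 32, 33, 57, 83, 85, 92, 107, 108]),
    ([18, 27, 30, 33, 36, 42, 75, 108, 109, 113, 130, 131], [15, 31, 38, 48, 54, 55, 62, 98, 113, 122, 136, 138]),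
    ([6, 15, 18, 21, 27, 33, 78, 79, 101, 116, 117, 133], [15, 31, 38, 48, 54, 55, 62, 98, 113, 122, 136, 138]),
    ([14, 16, 18, 20, 25, 27, 84, 85, 86, 87, 91, 93], [0, 4, 14, 15, 22, 38, 54, 55, 80, 81, 89, 90]),
    ([1, 5, 9, 11, 12, 66, 71, 72, 75, 77, 78, 139], [1, 2, 17, 25, 32, 33, 57, 83, 85, 92, 107, 108]),
    ([9, 49, 56, 75, 84, 85, 107, 123, 130, 131, 132, 139], [24, 30, 31, 35, 37, 90, 97, 101, 105, 107, 110, 111]),
    ([7, 9, 13, 17, 18, 20, 78, 79, 80, 83, 84, 86], [0, 4, 14, 15, 22, 38, 54, 55, 80, 81, 89, 90])]"

lemma logtab_good: "list_all (\<lambda>(E, V). goodc E V) logtab"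
  unfolding logtab_def goodc_def nbZ_def nbX_def sh_def by code_simp

lemma logtab_pairs: "list_all (\<lambda>a. list_all (\<lambda>b. a \<noteq> b \<longrightarrow> list_ex (\<lambda>(E, V). a \<in> set E \<and> b \<in> set E) logtab)
   [1, 2, 18, 75, 78, 84]) [1, 2, 18, 75, 78, 84]"
  unfolding logtab_def by code_simp

lemma supp0: "HX 0 q \<longleftrightarrow> q \<in> set [1, 2, 18, 75, 78, 84]"
proof -
  have "sh 3 0 0 = 18" "sh 0 1 0 = 1" "sh 0 2 0 = 2" "sh 0 3 0 = 3" "sh 1 0 0 = 6" "sh 2 0 0 = 12"
    by (simp_all add: sh_def)
  then show ?thesis unfolding HX_def gA_sh gB_sh by auto
qed

lemma pair_logical:
  assumes "HX 0 a" "HX 0 b" "a \<noteq> b"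
  shows "\<exists>E V. goodc E V \<and> a \<in> set E \<and> b \<in> set E"
proof -
  have "a \<in> set [1, 2, 18, 75, 78, 84]" "b \<in> set [1, 2, 18, 75, 78, 84]" using assms supp0 by auto
  then obtain E V where "(E, V) \<in> set logtab" "a \<in> set E" "b \<in> set E"
    using logtab_pairs assms(3) unfolding list_all_iff list_ex_iff by blast
  moreover have "goodc E V" using logtab_good calculation(1) unfolding list_all_iff by fastforce
  ultimately show ?thesis by blast
qed



lemma ref_flipped:
  assumes sv: "sec_valid s" and ker: "in_kernel HZ e"
  shows "flipped (memory False s r) {Ins 0 e nopauli} = {(r * T s + 1, q) | q. q < 144 \<and> e q}"
proof -
  have "flipped (memory False s r) {Ins 0 e nopauli} =
     {(r * T s + 1, q) | q. q < 144 \<and> Gf s e e False ((r * T s + 1 - 1) mod T s) q}"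
  proof (rule flipped_gen)
    show "noflip {Ins 0 e nopauli}" unfolding noflip_def by simp
    show "\<And>k. 1 \<le> k \<Longrightarrow> k \<le> r * T s + 1 \<Longrightarrow> frame_at (memory False s r) {Ins 0 e nopauli} k = (Gf s e e False ((k - 1) mod T s), nz)"
      by (rule ref_frame[OF sv ker])
    fix k j assume kj: "1 \<le> k" "k \<le> r * T s" "j < 72" "mZ s j = (k - 1) mod T s"
    show "\<not> Gf s e e False ((k - 1) mod T s) (zanc j)"
      using Pz_full[OF sv ker kj(3)] kj(3,4) by (simp add: Gf_zanc)
  qed
  then show ?thesis by (auto simp: Gf_data)
qed

lemma zx_flipped:
  assumes sv: "sec_valid s" and r: "1 \<le> r"
    and W: "\<And>q. W q \<longleftrightarrow> HX 0 q \<and> h < cX s 0 q" and We: "\<And>q. W q \<Longrightarrow> e q"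
    and hp: "pX s 0 < h" and hT: "h + 2 \<le> T s"
    and zx: "\<And>i j q. HX i q \<Longrightarrow> HZ j q \<Longrightarrow> cZ s j q < cX s i q"
  shows "flipped (memory False s r) (hookF ((r - 1) * T s + 1 + h) (r * T s) e W) = {(r * T s + 1, q) | q. q < 144 \<and> e q}"
proof -
  have "flipped (memory False s r) (hookF ((r - 1) * T s + 1 + h) (r * T s) e W) =
     {(r * T s + 1, q) | q. q < 144 \<and> Gzx s r e W h (r * T s + 1) q}"
  proof (rule flipped_gen)
    show "noflip (hookF ((r - 1) * T s + 1 + h) (r * T s) e W)" by (rule hookF_noflip)
    show "\<And>k. 1 \<le> k \<Longrightarrow> k \<le> r * T s + 1 \<Longrightarrow> frame_at (memory False s r) (hookF ((r - 1) * T s + 1 + h) (r * T s) e W) k = (Gzx s r e W h k, nz)"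
      by (rule zx_frame[OF sv r W We hp hT zx])
    fix k j assume kj: "1 \<le> k" "k \<le> r * T s" "j < 72" "mZ s j = (k - 1) mod T s"
    show "\<not> Gzx s r e W h k (zanc j)"
      unfolding Gzx_def using kj by (simp add: Gf_zanc Pz_nz)
  qed
  moreover have "r * T s + 1 > (r - 1) * T s + 1 + h"
  proof -
    have "r * T s = (r - 1) * T s + T s" using r
      by (metis add.commute le_add_diff_inverse mult.commute mult_Suc_right plus_1_eq_Suc)
    then show ?thesis using hT by simp
  qed
  ultimately show ?thesis unfolding Gzx_def by auto
qed

lemma xz_flipped:
  assumes sv: "sec_valid s" and r: "1 \<le> r" and ker: "in_kernel HZ e"
    and W: "\<And>q. W q \<longleftrightarrow> HX 0 q \<and> h < cX s 0 q" and We: "\<And>q. W q \<Longrightarrow> e q"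
    and hp: "pX s 0 < h" and hT: "h + 2 \<le> T s"
    and xz: "\<And>i j q. HX i q \<Longrightarrow> HZ j q \<Longrightarrow> cX s i q < cZ s j q"
  shows "flipped (memory False s r) (hookF ((r - 1) * T s + 1 + h) ((r - 1) * T s + 1) e W) = {(r * T s + 1, q) | q. q < 144 \<and> e q}"
proof -
  have rT: "r * T s = (r - 1) * T s + T s" using r
    by (metis add.commute le_add_diff_inverse mult.commute mult_Suc_right plus_1_eq_Suc)
  have "flipped (memory False s r) (hookF ((r - 1) * T s + 1 + h) ((r - 1) * T s + 1) e W) =
     {(r * T s + 1, q) | q. q < 144 \<and> Gxz s r e W h (r * T s + 1) q}"
  proof (rule flipped_gen)
    show "noflip (hookF ((r - 1) * T s + 1 + h) ((r - 1) * T s + 1) e W)" by (rule hookF_noflip)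
    show "\<And>k. 1 \<le> k \<Longrightarrow> k \<le> r * T s + 1 \<Longrightarrow> frame_at (memory False s r) (hookF ((r - 1) * T s + 1 + h) ((r - 1) * T s + 1) e W) k = (Gxz s r e W h k, nz)"
      by (rule xz_frame[OF sv r ker W We hp hT xz])
    fix k j assume kj: "1 \<le> k" "k \<le> r * T s" "j < 72" "mZ s j = (k - 1) mod T s"
    show "\<not> Gxz s r e W h k (zanc j)"
    proof (cases "k \<le> (r - 1) * T s + 1")
      case True
      then show ?thesis unfolding Gxz_def by simp
    next
      case False
      have "(k - 1) mod T s = k - 1 - (r - 1) * T s"
        by (rule mod_last[OF r]) (use False kj(2) in auto)
      then show ?thesis unfolding Gxz_def using False Pz_full[OF sv ker kj(3)] kj(3,4) by (simp add: Gf_zanc)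
    qed
  qed
  moreover have "Gxz s r e W h (r * T s + 1) q = e q" if "q < 144" for q
  proof -
    have "W q \<Longrightarrow> cX s 0 q < T s" using W sv_X[OF sv, of 0 q] by auto
    then show ?thesis unfolding Gxz_def using rT hT that We[of q] by (auto simp: Gf_data)
  qed
  ultimately show ?thesis by auto
qed


lemma parity_card_sum: "finite A \<Longrightarrow> even (card {x \<in> A. odd (f x :: nat)}) \<longleftrightarrow> even (\<Sum>x\<in>A. f x)"
proof (induction A rule: finite_induct)
  case empty
  then show ?case by simp
next
  case (insert a A)
  have "{x \<in> insert a A. odd (f x)} = (if odd (f a) then insert a {x \<in> A. odd (f x)} else {x \<in> A. odd (f x)})"
    by auto
  moreover have "finite {x \<in> A. odd (f x)}" using insert.hyps(1) by simp
  moreover have "a \<notin> {x \<in> A. odd (f x)}" using insert.hyps(2) by simp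
  ultimately show ?case using insert by auto
qed

lemma orth:
  assumes ker: "in_kernel HZ e" and rs: "in_rowspace HZ v"
  shows "even (card {q. q < 144 \<and> e q \<and> v q})"
proof -
  obtain w where w: "\<And>q. v q = (q < 144 \<and> odd (card {i. i < 72 \<and> w i \<and> HZ i q}))"
    using rs unfolding in_rowspace_def by blast
  define A where "A = {q. q < 144 \<and> e q}"
  have fA: "finite A" unfolding A_def by simp
  have "{q. q < 144 \<and> e q \<and> v q} = {q \<in> A. odd (card {i. i < 72 \<and> w i \<and> HZ i q})}"
    unfolding A_def using w by auto
  moreover have "even (\<Sum>q\<in>A. card {i. i < 72 \<and> w i \<and> HZ i q})"
  proof -
    have c: "card {i. i < 72 \<and> w i \<and> HZ i q} = (\<Sum>i<72. if w i \<and> HZ i q then 1 else 0)" for q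
    proof -
      have "{i. i < 72 \<and> w i \<and> HZ i q} = {i \<in> {..<72}. w i \<and> HZ i q}" by auto
      then show ?thesis by (simp add: sum.inter_filter[symmetric])
    qed
    have "(\<Sum>q\<in>A. card {i. i < 72 \<and> w i \<and> HZ i q}) = (\<Sum>i<72. \<Sum>q\<in>A. if w i \<and> HZ i q then 1 else 0)"
      unfolding c by (rule sum.swap)
    also have "\<dots> = (\<Sum>i<72. if w i then card {q \<in> A. HZ i q} else 0)"
    proof (rule sum.cong)
      fix i
      show "(\<Sum>q\<in>A. if w i \<and> HZ i q then 1 else 0) = (if w i then card {q \<in> A. HZ i q} else 0)"
        using fA by (simp add: sum.inter_filter[symmetric])
    qed simp
    finally have eq: "(\<Sum>q\<in>A. card {i. i < 72 \<and> w i \<and> HZ i q}) = (\<Sum>i<72. if w i then card {q \<in> A. HZ i q} else 0)" .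
    have "even (if w i then card {q \<in> A. HZ i q} else 0)" if "i < 72" for i
    proof -
      have "{q \<in> A. HZ i q} = {q. q < 144 \<and> HZ i q \<and> e q}" unfolding A_def by auto
      then show ?thesis using ker that unfolding in_kernel_def by simp
    qed
    then show ?thesis unfolding eq by (intro dvd_sum) simp
  qed
  ultimately show ?thesis using parity_card_sum[OF fA] by simp
qed

lemma rank_exists:
  fixes f :: "'a \<Rightarrow> nat"
  shows "finite S \<Longrightarrow> inj_on f S \<Longrightarrow> n < card S \<Longrightarrow> \<exists>x\<in>S. card {y \<in> S. f x < f y} = n"
proof (induction n arbitrary: S)
  case 0
  then have ne: "S \<noteq> {}" by auto
  have "Max (f ` S) \<in> f ` S" using 0 ne by (intro Max_in) auto
  then obtain m where m: "m \<in> S" "f m = Max (f ` S)" by (metis imageE)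
  have le: "f y \<le> Max (f ` S)" if "y \<in> S" for y using 0(1) that by (intro Max_ge) auto
  have e: "{y \<in> S. f m < f y} = {}" using m le by fastforce
  show ?case using m(1) unfolding e[symmetric] by (intro bexI[of _ m]) (simp_all add: e)
next
  case (Suc n)
  then have ne: "S \<noteq> {}" by auto
  have "Max (f ` S) \<in> f ` S" using Suc.prems ne by (intro Max_in) auto
  then obtain m where m: "m \<in> S" "f m = Max (f ` S)" by (metis imageE)
  define S' where "S' = S - {m}"
  have fS': "finite S'" using Suc.prems unfolding S'_def by simp
  have iS': "inj_on f S'" using Suc.prems(2) unfolding S'_def by (rule inj_on_subset) auto
  have cS': "n < card S'" using Suc.prems m unfolding S'_def by simp
  obtain x where x: "x \<in> S'" "card {y \<in> S'. f x < f y} = n" using Suc.IH[OF fS' iS' cS'] by blast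
  have xm: "f x < f m"
  proof -
    have "f x \<le> f m" using x(1) m Suc.prems(1) unfolding S'_def by simp
    moreover have "f x \<noteq> f m" using Suc.prems(2) x(1) m(1) unfolding S'_def inj_on_def by auto
    ultimately show ?thesis by simp
  qed
  have "{y \<in> S. f x < f y} = insert m {y \<in> S'. f x < f y}" using xm m(1) unfolding S'_def by auto
  moreover have "finite {y \<in> S'. f x < f y}" using fS' by simp
  moreover have "m \<notin> {y \<in> S'. f x < f y}" unfolding S'_def by simp
  ultimately have "card {y \<in> S. f x < f y} = Suc n" using x(2) by simp
  then show ?case using x(1) unfolding S'_def by blast
qed

lemma cX_inj:
  assumes sv: "sec_valid s"
  shows "inj_on (cX s 0) {q. HX 0 q}"
proof
  fix a b assume a: "a \<in> {q. HX 0 q}" and b: "b \<in> {q. HX 0 q}" and ab: "cX s 0 a = cX s 0 b"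
  show "a = b"
  proof (rule ccontr)
    assume ne: "a \<noteq> b"
    define \<tau> where "\<tau> = cX s 0 a"
    have tT: "\<tau> < T s" using sv_X[OF sv, of 0 a] a unfolding \<tau>_def by simp
    have d: "distinct (concat (map op_qubits (round_step s \<tau>)))" using sv tT unfolding sec_valid_def by blast
    have ma: "CNOT (xanc 0) a \<in> set (round_step s \<tau>)"
      using a HX_lt[of 0 a] unfolding round_step_def \<tau>_def by auto
    have mb: "CNOT (xanc 0) b \<in> set (round_step s \<tau>)"
      using b HX_lt[of 0 b] ab unfolding round_step_def \<tau>_def by auto
    have 3: "\<forall>ys zs. ys \<in> set (map op_qubits (round_step s \<tau>)) \<and> zs \<in> set (map op_qubits (round_step s \<tau>)) \<and> ys \<noteq> zs \<longrightarrow> set ys \<inter> set zs = {}"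
      using d distinct_concat_iff by blast
    have "[xanc 0, a] \<in> set (map op_qubits (round_step s \<tau>))"
      using ma by (auto intro!: image_eqI[where x="CNOT (xanc 0) a"])
    moreover have "[xanc 0, b] \<in> set (map op_qubits (round_step s \<tau>))"
      using mb by (auto intro!: image_eqI[where x="CNOT (xanc 0) b"])
    ultimately have "set [xanc 0, a] \<inter> set [xanc 0, b] = {}" using 3 ne by blast
    then show False by simp
  qed
qed

lemma data_busy:
  assumes "q < 144" "q \<in> set (concat (map op_qubits (round_step s \<tau>)))"
  shows "(\<exists>i. HX i q \<and> cX s i q = \<tau>) \<or> (\<exists>j. HZ j q \<and> cZ s j q = \<tau>)"
  using assms unfolding round_step_def by (auto simp: xanc_def zanc_def)


lemma bound_from_F:
  assumes sv: "sec_valid s" and ker: "in_kernel HZ e" and kv: "in_kernel HX v"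
    and od: "odd (card {q. q < 144 \<and> e q \<and> v q})"
    and fin: "finite F" and sub: "F \<subseteq> mechs (memory False s r) (noisy_steps s r)" and cF: "card F = 11"
    and fl: "flipped (memory False s r) F = {(r * T s + 1, q) | q. q < 144 \<and> e q}"
  shows "d_circ s r \<le> 11"
proof -
  let ?C = "memory False s r"
  have det: "\<forall>S. detector False s r S \<longrightarrow> \<not> flips ?C F S"
  proof (intro allI impI)
    fix S assume "detector False s r S"
    then have "\<not> flips ?C {Ins 0 e nopauli} S" using ker unfolding detector_def by simp
    then show "\<not> flips ?C F S" unfolding flips_def fl ref_flipped[OF sv ker] .
  qed
  have zl: "z_logical v"
  proof -
    have "\<not> in_rowspace HZ v" using orth[OF ker] od by blast
    then show ?thesis using kv unfolding z_logical_def by simp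
  qed
  define S where "S = {(length ?C - 1, q) | q. q < 144 \<and> v q}"
  have lo: "logical_obs False s r S" unfolding logical_obs_def S_def using zl by auto
  have "flipped ?C F \<inter> S = (\<lambda>q. (r * T s + 1, q)) ` {q. q < 144 \<and> e q \<and> v q}"
    unfolding fl S_def mem_len by auto
  moreover have "card ((\<lambda>q. (r * T s + 1, q)) ` {q. q < 144 \<and> e q \<and> v q}) = card {q. q < 144 \<and> e q \<and> v q}"
    by (rule card_image) (auto simp: inj_on_def)
  ultimately have "flips ?C F S" unfolding flips_def using od by simp
  then have "\<exists>S. logical_obs False s r S \<and> flips ?C F S" using lo by blast
  then have "enat (card F) \<in> {enat (card F) | F. finite F \<and> F \<subseteq> mechs ?C (noisy_steps s r) \<and>
      (\<forall>S. detector False s r S \<longrightarrow> \<not> flips ?C F S) \<and> (\<exists>S. logical_obs False s r S \<and> flips ?C F S)}"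
    using fin sub det by blast
  then have "d_circ_basis False s r \<le> enat (card F)" unfolding d_circ_basis_def by (rule Inf_lower)
  then have "d_circ_basis False s r \<le> 11" using cF by (simp add: numeral_eq_enat)
  then show ?thesis unfolding d_circ_def by (meson min.cobounded2 order_trans)
qed

lemma hookF_card:
  assumes "kh \<noteq> K" "card {q. q < 144 \<and> e q \<and> \<not> W q} = 10"
  shows "card (hookF kh K e W) = 11"
proof -
  have inj: "inj_on (\<lambda>q. Ins K (\<lambda>q'. q' = q) nopauli) {q. q < 144 \<and> e q \<and> \<not> W q}"
  proof
    fix a b assume "Ins K (\<lambda>q'. q' = a) nopauli = Ins K (\<lambda>q'. q' = b) nopauli"
    then have "(\<lambda>q'. q' = a) = (\<lambda>q'. q' = b)" by simp
    then show "a = b" by metis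
  qed
  have "Ins kh (single (xanc 0)) nopauli \<notin> (\<lambda>q. Ins K (\<lambda>q'. q' = q) nopauli) ` {q. q < 144 \<and> e q \<and> \<not> W q}"
    using assms(1) by auto
  moreover have "finite ((\<lambda>q. Ins K (\<lambda>q'. q' = q) nopauli) ` {q. q < 144 \<and> e q \<and> \<not> W q})" by simp
  ultimately show ?thesis unfolding hookF_def using card_image[OF inj] assms(2) by simp
qed

lemma hookF_mechs:
  assumes sv: "sec_valid s" and r: "1 \<le> r" and q4: "HX 0 q4" and h: "h = cX s 0 q4"
    and K: "1 \<le> K" "K \<le> r * T s"
    and idle: "\<And>q. q < 144 \<Longrightarrow> q \<notin> set (concat (map op_qubits (memory False s r ! K)))"
  shows "hookF ((r - 1) * T s + 1 + h) K e W \<subseteq> mechs (memory False s r) (noisy_steps s r)"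
proof
  fix m assume m: "m \<in> hookF ((r - 1) * T s + 1 + h) K e W"
  have rT: "r * T s = (r - 1) * T s + T s" using r
    by (metis add.commute le_add_diff_inverse mult.commute mult_Suc_right plus_1_eq_Suc)
  have hb: "h + 2 \<le> T s" "pX s 0 < h" using sv_X[OF sv q4] h by auto
  show "m \<in> mechs (memory False s r) (noisy_steps s r)"
  proof (cases "m = Ins ((r - 1) * T s + 1 + h) (single (xanc 0)) nopauli")
    case True
    define kh where "kh = (r - 1) * T s + 1 + h"
    have khr: "1 \<le> kh" "kh \<le> r * T s" unfolding kh_def using rT hb by auto
    have "(kh - 1) mod T s = h"
      unfolding kh_def by (subst mod_last[OF r]) (use rT hb in auto)
    then have mk: "memory False s r ! kh = round_step s h" using memk[OF khr] by simp
    have "CNOT (xanc 0) q4 \<in> set (round_step s h)"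
      using q4 HX_lt[OF q4] h unfolding round_step_def by auto
    then have "CNOT (xanc 0) q4 \<in> set (memory False s r ! kh)" using mk by simp
    moreover have "kh \<in> noisy_steps s r" "kh < length (memory False s r)"
      using khr unfolding noisy_steps_def by (auto simp: mem_len)
    ultimately have c: "\<exists>c t px pz. CNOT c t \<in> set (memory False s r ! kh) \<and>
        (\<forall>q. q \<noteq> c \<and> q \<noteq> t \<longrightarrow> \<not> px q \<and> \<not> pz q) \<and> (\<exists>q. px q \<or> pz q) \<and> m = Ins kh px pz"
      using True unfolding kh_def
      by (intro exI[of _ "xanc 0"] exI[of _ q4] exI[of _ "single (xanc 0)"] exI[of _ nopauli])
         (auto simp: single_def nopauli_def)
    have "kh \<in> noisy_steps s r" "kh < length (memory False s r)"
      using khr unfolding noisy_steps_def by (auto simp: mem_len)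
    then show ?thesis unfolding mechs_def using c by blast
  next
    case False
    then obtain q where q: "q < 144" "e q" "\<not> W q" "m = Ins K (\<lambda>q'. q' = q) nopauli"
      using m unfolding hookF_def by auto
    have "K \<in> noisy_steps s r" "K < length (memory False s r)"
      using K unfolding noisy_steps_def by (auto simp: mem_len)
    moreover have "q < nqubits" using q unfolding nqubits_def by simp
    moreover have "m = Ins K (\<lambda>q'. q' = q \<and> True) (\<lambda>q'. q' = q \<and> False)"
      using q(4) by (simp add: nopauli_def)
    ultimately show ?thesis unfolding mechs_def using idle[OF q(1)] by blast
  qed
qed


theorem proposition4:
  fixes s :: "sched" and r :: nat
  assumes "sec_valid s" and "non_interleaved s" and "r \<ge> 1"
  shows "d_circ s r \<le> 11"
proof -
  note sv = assms(1) and r = assms(3)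
  define S0 where "S0 = {q. HX 0 q}"
  have S0l: "S0 = set [1, 2, 18, 75, 78, 84]" unfolding S0_def using supp0 by auto
  have fS0: "finite S0" unfolding S0l by simp
  have cS0: "card S0 = 6" unfolding S0l by simp
  obtain q4 where q4: "q4 \<in> S0" "card {y \<in> S0. cX s 0 q4 < cX s 0 y} = 2"
    using rank_exists[OF fS0 cX_inj[OF sv, folded S0_def], of 2] cS0 by auto
  have hq4: "HX 0 q4" using q4(1) unfolding S0_def by simp
  define h where "h = cX s 0 q4"
  define W where "W = (\<lambda>q. HX 0 q \<and> h < cX s 0 q)"
  have Wd: "\<And>q. W q \<longleftrightarrow> HX 0 q \<and> h < cX s 0 q" unfolding W_def by simp
  have "{q. W q} = {y \<in> S0. cX s 0 q4 < cX s 0 y}" unfolding W_def S0_def h_def by auto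
  then have "card {q. W q} = 2" using q4(2) by simp
  then obtain a b where ab: "a \<noteq> b" "{q. W q} = {a, b}" by (auto simp: card_2_iff)
  have Wab: "W q \<longleftrightarrow> q = a \<or> q = b" for q using ab(2) by auto
  have ha: "HX 0 a" and hb: "HX 0 b" using Wab[of a] Wab[of b] unfolding W_def by auto
  obtain E V where EV: "goodc E V" "a \<in> set E" "b \<in> set E" using pair_logical[OF ha hb ab(1)] by blast
  define e where "e = (\<lambda>q. q \<in> set E)"
  define v where "v = (\<lambda>q. q \<in> set V)"
  have ker: "in_kernel HZ e" unfolding e_def by (rule goodc_sound(1)[OF EV(1)])
  have kv: "in_kernel HX v" unfolding v_def by (rule goodc_sound(2)[OF EV(1)])
  have od: "odd (card {q. q < 144 \<and> e q \<and> v q})" unfolding e_def v_def by (rule goodc_sound(4)[OF EV(1)])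
  have We: "\<And>q. W q \<Longrightarrow> e q" using Wab EV unfolding e_def by auto
  have E144: "e q \<Longrightarrow> q < 144" for q using ker unfolding in_kernel_def by blast
  have cE': "card {q. q < 144 \<and> e q \<and> \<not> W q} = 10"
  proof -
    have "{q. q < 144 \<and> e q \<and> \<not> W q} = set E - {a, b}" using E144 Wab unfolding e_def by auto
    moreover have "card (set E - {a, b}) = 10"
      using goodc_sound(3)[OF EV(1)] EV(2,3) ab(1) by (simp add: card_Diff_subset)
    ultimately show ?thesis by simp
  qed
  have hp: "pX s 0 < h" and hT: "h + 2 \<le> T s" using sv_X[OF sv hq4] unfolding h_def by auto
  have T0: "T s > 0" using hT by simp
  define base where "base = (r - 1) * T s"
  have rT: "r * T s = base + T s" unfolding base_def using r
    by (metis add.commute le_add_diff_inverse mult.commute mult_Suc_right plus_1_eq_Suc)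
  from assms(2) consider (XZ) "\<forall>i j q. HX i q \<longrightarrow> HZ j q \<longrightarrow> cX s i q < cZ s j q"
    | (ZX) "\<forall>i j q. HX i q \<longrightarrow> HZ j q \<longrightarrow> cZ s j q < cX s i q"
    unfolding non_interleaved_def by blast
  then show ?thesis
  proof cases
    case XZ
    then have xz: "\<And>i j q. HX i q \<Longrightarrow> HZ j q \<Longrightarrow> cX s i q < cZ s j q" by blast
    define F where "F = hookF ((r - 1) * T s + 1 + h) ((r - 1) * T s + 1) e W"
    have K: "1 \<le> base + 1" "base + 1 \<le> r * T s" using rT T0 by auto
    have mK: "memory False s r ! (base + 1) = round_step s 0"
    proof -
      have "(base + 1 - 1) mod T s = 0"
        unfolding base_def by (subst mod_last[OF r]) (use rT T0 in \<open>auto simp: base_def\<close>)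
      then show ?thesis using memk[OF K] by simp
    qed
    have idle: "q \<notin> set (concat (map op_qubits (memory False s r ! (base + 1))))" if "q < 144" for q
    proof
      assume "q \<in> set (concat (map op_qubits (memory False s r ! (base + 1))))"
      then have "(\<exists>i. HX i q \<and> cX s i q = 0) \<or> (\<exists>j. HZ j q \<and> cZ s j q = 0)"
        using data_busy[OF that] unfolding mK by blast
      then show False using sv_X[OF sv] sv_Z[OF sv] by fastforce
    qed
    have sub: "F \<subseteq> mechs (memory False s r) (noisy_steps s r)"
      unfolding F_def by (rule hookF_mechs[OF sv r hq4 h_def K[unfolded base_def] idle[unfolded base_def]])
    have cF: "card F = 11" unfolding F_def by (rule hookF_card) (use hp cE' in auto)
    have fin: "finite F" unfolding F_def hookF_def by simp
    have fl: "flipped (memory False s r) F = {(r * T s + 1, q) | q. q < 144 \<and> e q}"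
      unfolding F_def by (rule xz_flipped[OF sv r ker Wd We hp hT xz])
    show ?thesis by (rule bound_from_F[OF sv ker kv od fin sub cF fl])
  next
    case ZX
    then have zx: "\<And>i j q. HX i q \<Longrightarrow> HZ j q \<Longrightarrow> cZ s j q < cX s i q" by blast
    define F where "F = hookF ((r - 1) * T s + 1 + h) (r * T s) e W"
    have K: "1 \<le> r * T s" "r * T s \<le> r * T s" using rT T0 by auto
    have mK: "memory False s r ! (r * T s) = round_step s (T s - 1)"
    proof -
      have "(r * T s - 1) mod T s = T s - 1"
        by (subst mod_last[OF r]) (use rT T0 in \<open>auto simp: base_def\<close>)
      then show ?thesis using memk[OF K] by simp
    qed
    have idle: "q \<notin> set (concat (map op_qubits (memory False s r ! (r * T s))))" if "q < 144" for q
    proof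
      assume "q \<in> set (concat (map op_qubits (memory False s r ! (r * T s))))"
      then have "(\<exists>i. HX i q \<and> cX s i q = T s - 1) \<or> (\<exists>j. HZ j q \<and> cZ s j q = T s - 1)"
        using data_busy[OF that] unfolding mK by blast
      then show False using sv_X[OF sv] sv_Z[OF sv] by fastforce
    qed
    have sub: "F \<subseteq> mechs (memory False s r) (noisy_steps s r)"
      unfolding F_def by (rule hookF_mechs[OF sv r hq4 h_def K idle])
    have cF: "card F = 11" unfolding F_def by (rule hookF_card) (use hT rT cE' in \<open>auto simp: base_def\<close>)
    have fin: "finite F" unfolding F_def hookF_def by simp
    have fl: "flipped (memory False s r) F = {(r * T s + 1, q) | q. q < 144 \<and> e q}"
      unfolding F_def by (rule zx_flipped[OF sv r Wd We hp hT zx])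
    show ?thesis by (rule bound_from_F[OF sv ker kv od fin sub cF fl])
  qed
qed

end
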